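(* Consider the semidefinite program $$p^*=\min_X \ \operatorname{Tr}(C^TX)\quad\text{s.t.}\quad \operatorname{Tr}(A_i^TX)=b_i\ (i=1,\dots,M),\quad X\succeq 0,$$ with $N\times N$ real symmetric data $C,A_1,\dots,A_M$, $b\in\mathbb{R}^M$, satisfying: $\operatorname{Tr}(A_i^TA_j)=0$ for all $i\neq j$, $\operatorname{Tr}(A_i^TC)=0$ for all $i$, $\|C\|_F=\|A_i\|_F=1$ for all $i$; there is a feasible $X\succ0$; and $p^*>-\infty$. For $t>0$ let $X_t$ be the minimizer of $\operatorname{Tr}(C^TX)-\frac1t\log\det X$ subject to $\operatorname{Tr}(A_i^TX)=b_i$, $X\succ0$, and let $\gamma(t)\in\mathbb{R}^M$ be the associated Lagrange multipliers, i.e. $X_t^{-1}=t\big(C-\sum_{i}\gamma_i(t)A_i\big)$. Let $K$ be either $DD_N$ (with $0<\Phi\le \frac{2}{N+1}$) or $SDD_N$ (with $0<\Phi\le 1$). Fix $t_0>0$ and $0<\epsilon^*\le N/t_0$, put $t^*=N/\epsilon^*$, and let $\Theta=\max_{t\in[t_0,t^*]}\sum_{i=1}^M\gamma_i(t)^2$. Run the following idealized (exact-centering) algorithm: $X_0=X_{t_0}$; for $k\ge1$, with $U_{k-1}$ the Cholesky factor of $X_{k-1}$ ($X_{k-1}=U_{k-1}^TU_{k-1}$), let $X_k^{\mathrm{dec}}$ be an optimizer of $$\min_{X,Y}\operatorname{Tr}(C^TX)\ \text{s.t.}\ \operatorname{Tr}(A_i^TX)=b_i\ (i=1,\dots,M),\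 X=U_{k-1}^TYU_{k-1},\ Y\in K,$$ and let $X_k$ be the maximizer of $\log\det X$ over $\{X\succ0:\operatorname{Tr}(A_i^TX)=b_i\ \forall i,\ \operatorname{Tr}(C^TX)=\operatorname{Tr}(C^TX_k^{\mathrm{dec}})\}$. Then, with $$\chi=\frac{N\sqrt{1+\Theta}}{N\sqrt{1+\Theta}-\sqrt{\Phi}}>1,\qquad \kappa=\left\lceil\frac{\log(N/\epsilon^* )-\log t_0}{\log\chi}\right\rceil,$$ the algorithm reaches $\epsilon^*$-optimality within $\kappa$ iterations: $\operatorname{Tr}(C^TX_\kappa)-p^*\le\epsilon^*$.
   Context: A symmetric matrix $X$ is diagonally dominant ($X\in DD_N$) if $X(i,i)\ge\sum_{j\ne i}|X(i,j)|$ for all $i$; it is scaled diagonally dominant ($X\in SDD_N$) if $X=DYD$ for some positive diagonal $D$ and some $Y\in DD_N$. The Cholesky factor $U$ of $X\succ0$ is the upper-triangular matrix with $X=U^TU$. The curve $t\mapsto X_t$ is the central path of the SDP. *)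

theory Defs
  imports "HOL-Analysis.Analysis"
begin

type_synonym 'n rmat = "real^'n^'n"

definition frob :: "'n::finite rmat \<Rightarrow> 'n rmat \<Rightarrow> real" where
  "frob A X = trace (transpose A ** X)"

definition frob_norm :: "'n::finite rmat \<Rightarrow> real" where
  "frob_norm A = sqrt (frob A A)"

definition sym_mat :: "'n::finite rmat \<Rightarrow> bool" where
  "sym_mat X \<longleftrightarrow> transpose X = X"

definition psd :: "'n::finite rmat \<Rightarrow> bool" where
  "psd X \<longleftrightarrow> sym_mat X \<and> (\<forall>v. 0 \<le> v \<bullet> (X *v v))"

definition pd :: "'n::finite rmat \<Rightarrow> bool" where
  "pd X \<longleftrightarrow> sym_mat X \<and> (\<forall>v. v \<noteq> 0 \<longrightarrow> 0 < v \<bullet> (X *v v))"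

definition dd :: "'n::finite rmat \<Rightarrow> bool" where
  "dd X \<longleftrightarrow> sym_mat X \<and> (\<forall>i. (\<Sum>j\<in>UNIV - {i}. \<bar>X$i$j\<bar>) \<le> X$i$i)"

definition diag_mat :: "real^'n \<Rightarrow> 'n::finite rmat" where
  "diag_mat d = (\<chi> i j. if i = j then d$i else 0)"

definition sdd :: "'n::finite rmat \<Rightarrow> bool" where
  "sdd X \<longleftrightarrow> (\<exists>d Y. (\<forall>i. 0 < d$i) \<and> dd Y \<and> X = diag_mat d ** Y ** diag_mat d)"

definition cholesky_factor :: "('n::{finite,wellorder}) rmat \<Rightarrow> 'n rmat \<Rightarrow> bool" where
  "cholesky_factor U X \<longleftrightarrow> (\<forall>i j. j < i \<longrightarrow> U$i$j = 0) \<and> (\<forall>i. 0 < U$i$i)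
     \<and> X = transpose U ** U"

definition sdp_feasible :: "nat \<Rightarrow> (nat \<Rightarrow> 'n::finite rmat) \<Rightarrow> (nat \<Rightarrow> real) \<Rightarrow> 'n rmat \<Rightarrow> bool" where
  "sdp_feasible M A b X \<longleftrightarrow> (\<forall>i<M. frob (A i) X = b i)"

definition sdp_opt :: "'n::finite rmat \<Rightarrow> nat \<Rightarrow> (nat \<Rightarrow> 'n rmat) \<Rightarrow> (nat \<Rightarrow> real) \<Rightarrow> real" where
  "sdp_opt C M A b = Inf {frob C X | X. sdp_feasible M A b X \<and> psd X}"

end

theory Submission
  imports Defs
begin

lemma frob_inner: "frob A B = A \<bullet> B"
  unfolding frob_def trace_def matrix_matrix_mult_def transpose_def inner_vec_def
  by simp (rule sum.swap)

lemma norm_sq_mat: "(norm (A::'n::finite rmat))^2 = (\<Sum>i\<in>UNIV. \<Sum>j\<in>UNIV. (A$i$j)^2)"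
  unfolding power2_norm_eq_inner inner_vec_def by (simp add: power2_eq_square)

lemma norm_transpose_mat: "norm (transpose (A::'n::finite rmat)) = norm A"
proof -
  have "(norm (transpose A))^2 = (norm A)^2"
    unfolding norm_sq_mat transpose_def by simp (rule sum.swap)
  then show ?thesis by (simp add: power2_eq_iff_nonneg)
qed

lemma norm_mat_vec: "norm ((A::'n::finite rmat) *v v) \<le> norm A * norm v"
proof -
  have "(norm (A *v v))^2 = (\<Sum>i\<in>UNIV. (A$i \<bullet> v)^2)"
    unfolding power2_norm_eq_inner inner_vec_def matrix_vector_mult_def
    by (simp add: power2_eq_square inner_vec_def)
  also have "\<dots> \<le> (\<Sum>i\<in>UNIV. (norm (A$i))^2 * (norm v)^2)"
  proof (rule sum_mono)
    fix i
    have "\<bar>A$i \<bullet> v\<bar> \<le> norm (A$i) * norm v" by (rule Cauchy_Schwarz_ineq2)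
    then show "(A$i \<bullet> v)^2 \<le> (norm (A$i))^2 * (norm v)^2"
      by (metis abs_ge_zero power2_abs power_mono power_mult_distrib)
  qed
  also have "\<dots> = (norm A)^2 * (norm v)^2"
    by (simp add: sum_distrib_right[symmetric] power2_norm_eq_inner inner_vec_def)
  finally have "(norm (A *v v))^2 \<le> (norm A * norm v)^2" by (simp add: power_mult_distrib)
  then show ?thesis by (simp add: power2_le_iff_abs_le)
qed

lemma norm_mat_mul: "norm ((A::'n::finite rmat) ** (B::'n rmat)) \<le> norm A * norm B"
proof -
  have row: "(A ** B)$i = transpose B *v (A$i)" for i
    by (simp add: vec_eq_iff matrix_matrix_mult_def matrix_vector_mult_def transpose_def mult.commute)
  have "(norm (A ** B))^2 = (\<Sum>i\<in>UNIV. (norm ((A**B)$i))^2)"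
    by (simp add: power2_norm_eq_inner inner_vec_def)
  also have "\<dots> \<le> (\<Sum>i\<in>UNIV. (norm B)^2 * (norm (A$i))^2)"
  proof (rule sum_mono)
    fix i
    have "norm ((A**B)$i) \<le> norm B * norm (A$i)"
      using norm_mat_vec[of "transpose B" "A$i"] by (simp add: row norm_transpose_mat)
    then show "(norm ((A**B)$i))^2 \<le> (norm B)^2 * (norm (A$i))^2"
      by (metis norm_ge_zero power_mono power_mult_distrib)
  qed
  also have "\<dots> = (norm B)^2 * (norm A)^2"
    by (simp add: sum_distrib_left[symmetric] power2_norm_eq_inner inner_vec_def)
  finally have "(norm (A ** B))^2 \<le> (norm A * norm B)^2" by (simp add: power_mult_distrib mult.commute)
  then show ?thesis by (simp add: power2_le_iff_abs_le)
qed

lemma inner_mat_transpose: "(x::real^'n::finite) \<bullet> ((A::'n rmat) *v y) = (transpose A *v x) \<bullet> y"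
  by (simp add: dot_lmul_matrix)

lemma sym_inner: "sym_mat (A::'n rmat) \<Longrightarrow> (x::real^'n::finite) \<bullet> (A *v y) = (A *v x) \<bullet> y"
  by (simp add: sym_mat_def inner_mat_transpose)

lemma inv_props:
  fixes A :: "'n::finite rmat"
  assumes "invertible A"
  shows "A ** matrix_inv A = mat 1" "matrix_inv A ** A = mat 1"
proof -
  have "\<exists>A'. A ** A' = mat 1 \<and> A' ** A = mat 1" using assms unfolding invertible_def .
  then have "A ** matrix_inv A = mat 1 \<and> matrix_inv A ** A = mat 1"
    unfolding matrix_inv_def by (rule someI_ex)
  then show "A ** matrix_inv A = mat 1" "matrix_inv A ** A = mat 1" by auto
qed

lemma inv_unique:
  fixes A B :: "'n::finite rmat"
  assumes "A ** B = mat 1"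
  shows "matrix_inv A = B" "invertible A"
proof -
  have BA: "B ** A = mat 1" using assms matrix_left_right_inverse by blast
  show inv: "invertible A" unfolding invertible_def using assms BA by blast
  have "matrix_inv A = matrix_inv A ** (A ** B)" by (simp add: assms)
  also have "\<dots> = B" by (simp add: matrix_mul_assoc inv_props[OF inv])
  finally show "matrix_inv A = B" .
qed

lemma inv_invertible: assumes "invertible (A::'n::finite rmat)" shows "invertible (matrix_inv A)"
  unfolding invertible_def using inv_props[OF assms] by blast

lemma inv_transpose:
  fixes A :: "'n::finite rmat"
  assumes "invertible A"
  shows "matrix_inv (transpose A) = transpose (matrix_inv A)"
proof (rule inv_unique(1))
  show "transpose A ** transpose (matrix_inv A) = mat 1"
    by (simp add: matrix_transpose_mul[symmetric] inv_props[OF assms])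
qed

lemma inv_mul:
  fixes A B :: "'n::finite rmat"
  assumes "invertible A" "invertible B"
  shows "matrix_inv (A ** B) = matrix_inv B ** matrix_inv A"
proof (rule inv_unique(1))
  have "A ** B ** (matrix_inv B ** matrix_inv A) = A ** (B ** matrix_inv B) ** matrix_inv A"
    by (simp add: matrix_mul_assoc)
  then show "A ** B ** (matrix_inv B ** matrix_inv A) = mat 1"
    by (simp add: inv_props assms)
qed

lemma inv_inv: "invertible (A::'n::finite rmat) \<Longrightarrow> matrix_inv (matrix_inv A) = A"
  by (rule inv_unique(1)) (simp add: inv_props)

lemma pd_psd: "pd X \<Longrightarrow> psd X"
  unfolding pd_def psd_def
proof (intro conjI allI)
  fix v assume a: "sym_mat X \<and> (\<forall>v. v \<noteq> 0 \<longrightarrow> 0 < v \<bullet> (X *v v))"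
  show "0 \<le> v \<bullet> (X *v v)"
  proof (cases "v = 0")
    case False then show ?thesis using a by (simp add: less_imp_le)
  qed simp
qed (auto)

lemma pd_invertible:
  fixes X :: "'n::finite rmat"
  assumes "pd X" shows "invertible X"
proof -
  have "\<forall>x. X *v x = 0 \<longrightarrow> x = 0"
  proof (intro allI impI)
    fix x assume "X *v x = 0"
    then have "x \<bullet> (X *v x) = 0" by simp
    then show "x = 0" using assms unfolding pd_def by (metis less_irrefl)
  qed
  then show ?thesis using matrix_left_invertible_ker invertible_left_inverse by blast
qed

lemma sym_inv:
  fixes X :: "'n::finite rmat"
  assumes "sym_mat X" "invertible X"
  shows "sym_mat (matrix_inv X)"
  using assms unfolding sym_mat_def using inv_transpose[of X] by simp

lemma pd_inv:
  fixes X :: "'n::finite rmat"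
  assumes "pd X" shows "pd (matrix_inv X)"
proof -
  have inv: "invertible X" using pd_invertible assms by blast
  have sym: "sym_mat X" using assms pd_def by blast
  show ?thesis unfolding pd_def
  proof (intro conjI allI impI)
    show "sym_mat (matrix_inv X)" using sym_inv sym inv by blast
    fix v :: "real^'n" assume v: "v \<noteq> 0"
    define w where "w = matrix_inv X *v v"
    have Xw: "X *v w = v" unfolding w_def by (simp add: matrix_vector_mul_assoc inv_props[OF inv])
    have "w \<noteq> 0" using Xw v by auto
    then have "0 < w \<bullet> (X *v w)" using assms pd_def by blast
    also have "w \<bullet> (X *v w) = v \<bullet> (matrix_inv X *v v)"
      unfolding Xw by (subst inner_commute) (simp only: w_def)
    finally show "0 < v \<bullet> (matrix_inv X *v v)" .
  qed
qed

lemma chol_invertible: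
  fixes U X :: "'n::{finite,wellorder} rmat"
  assumes "cholesky_factor U X"
  shows "invertible U" "X = transpose U ** U" "0 < det U"
proof -
  have "det U = prod (\<lambda>i. U$i$i) UNIV"
    by (rule det_upperdiagonal) (use assms in \<open>unfold cholesky_factor_def, blast\<close>)
  also have "\<dots> > 0" using assms unfolding cholesky_factor_def by (intro prod_pos) blast
  finally show "0 < det U" .
  then show "invertible U" by (simp add: invertible_det_nz)
  show "X = transpose U ** U" using assms cholesky_factor_def by blast
qed

lemma diag_quad: "(transpose B ** Q ** B)$j$j = column j B \<bullet> (Q *v column j B)"
  for B Q :: "'n::finite rmat"
  apply (simp add: matrix_matrix_mult_def transpose_def column_def inner_vec_def matrix_vector_mult_def
      sum_distrib_left sum_distrib_right)
  apply (subst sum.swap)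
  apply (simp add: mult_ac)
  done

lemma trace_quad_psd:
  fixes B Q :: "'n::finite rmat"
  assumes "psd Q"
  shows "0 \<le> trace (transpose B ** Q ** B)"
  unfolding trace_def diag_quad by (intro sum_nonneg) (use assms psd_def in blast)

lemma trace_quad_pd_zero:
  fixes B Q :: "'n::finite rmat"
  assumes "pd Q" "trace (transpose B ** Q ** B) = 0"
  shows "B = 0"
proof -
  have nn: "\<And>j. j \<in> UNIV \<Longrightarrow> 0 \<le> column j B \<bullet> (Q *v column j B)"
    using pd_psd[OF assms(1)] unfolding psd_def by blast
  have s0: "(\<Sum>j\<in>UNIV. column j B \<bullet> (Q *v column j B)) = 0"
    using assms(2) unfolding trace_def diag_quad .
  have z: "column j B \<bullet> (Q *v column j B) = 0" for j
    using sum_nonneg_eq_0_iff[of UNIV "\<lambda>j. column j B \<bullet> (Q *v column j B)"] nn s0 by simp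
  have "column j B = 0" for j
  proof (rule ccontr)
    assume "column j B \<noteq> 0"
    then have "0 < column j B \<bullet> (Q *v column j B)" using assms(1) unfolding pd_def by blast
    then show False using z[of j] by simp
  qed
  then show "B = 0" by (simp add: vec_eq_iff column_def) 
qed

lemma mm_diff_left: "(A::'n::finite rmat) ** (B - C) = A ** B - A ** C"
  by (simp add: vec_eq_iff matrix_matrix_mult_def sum_subtractf algebra_simps)
lemma mm_diff_right: "((A::'n::finite rmat) - B) ** C = A ** C - B ** C"
  by (simp add: vec_eq_iff matrix_matrix_mult_def sum_subtractf algebra_simps)
lemma mm_add_right: "((A::'n::finite rmat) + B) ** C = A ** C + B ** C"
  by (simp add: vec_eq_iff matrix_matrix_mult_def sum.distrib algebra_simps)
lemma mm_add_left: "(A::'n::finite rmat) ** (B + C) = A ** B + A ** C"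
  by (simp add: vec_eq_iff matrix_matrix_mult_def sum.distrib algebra_simps)
lemma mm_scale_left: "(c *\<^sub>R (A::'n::finite rmat)) ** B = c *\<^sub>R (A ** B)"
  by (simp add: vec_eq_iff matrix_matrix_mult_def sum_distrib_left algebra_simps)
lemma mm_scale_right: "(A::'n::finite rmat) ** (c *\<^sub>R B) = c *\<^sub>R (A ** B)"
  by (simp add: vec_eq_iff matrix_matrix_mult_def sum_distrib_left algebra_simps)
lemma transpose_diff: "transpose ((A::'n::finite rmat) - B) = transpose A - transpose B"
  by (simp add: vec_eq_iff transpose_def)
lemma transpose_add: "transpose ((A::'n::finite rmat) + B) = transpose A + transpose B"
  by (simp add: vec_eq_iff transpose_def)
lemma trace_scale: "trace (c *\<^sub>R (A::'n::finite rmat)) = c * trace A"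
  by (simp add: trace_def sum_distrib_left)

lemma frob_sym: "frob A B = frob B A"
  by (simp add: frob_inner inner_commute)

lemma frob_trace_sym: "sym_mat A \<Longrightarrow> frob A B = trace (A ** B)"
  by (simp add: frob_def sym_mat_def)

lemma frob_self: "frob A A = (norm A)^2"
  by (simp add: frob_inner power2_norm_eq_inner)

lemma frob_inv_self:
  fixes X :: "'n::finite rmat"
  assumes "sym_mat X" "invertible X"
  shows "frob (matrix_inv X) X = real CARD('n)"
  using sym_inv[OF assms] by (simp add: frob_trace_sym inv_props[OF assms(2)] trace_I)

lemma sym_diff: "sym_mat A \<Longrightarrow> sym_mat B \<Longrightarrow> sym_mat (A - B)"
  by (simp add: sym_mat_def transpose_diff)
lemma sym_add: "sym_mat A \<Longrightarrow> sym_mat B \<Longrightarrow> sym_mat (A + B)"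
  by (simp add: sym_mat_def transpose_add)
lemma sym_scale: "sym_mat A \<Longrightarrow> sym_mat (c *\<^sub>R A)"
  by (simp add: sym_mat_def transpose_scalar)
lemma sym_id: "sym_mat (mat 1 :: 'n::finite rmat)"
  by (simp add: sym_mat_def)
lemma sym_sum: "(\<And>i. i \<in> S \<Longrightarrow> sym_mat (f i)) \<Longrightarrow> sym_mat (\<Sum>i\<in>S. f i :: 'n::finite rmat)"
proof (induction S rule: infinite_finite_induct)
  case (insert x F) then show ?case by (simp add: sym_add)
qed (simp_all add: sym_mat_def vec_eq_iff transpose_def)
lemma sym_congr: "sym_mat A \<Longrightarrow> sym_mat (transpose B ** A ** B)"
  by (simp add: sym_mat_def matrix_transpose_mul matrix_mul_assoc)

lemma inv_gram:
  fixes U :: "'n::finite rmat"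
  assumes "invertible U"
  shows "matrix_inv (transpose U ** U) = matrix_inv U ** transpose (matrix_inv U)"
  using inv_mul[OF transpose_invertible[OF assms] assms] inv_transpose[OF assms] by simp

lemma frob_gram_psd:
  fixes U Y :: "'n::finite rmat"
  assumes "invertible U" "psd Y"
  shows "0 \<le> frob (matrix_inv (transpose U ** U)) Y"
proof -
  define W where "W = matrix_inv U"
  have "frob (matrix_inv (transpose U ** U)) Y = trace (W ** transpose W ** Y)"
    unfolding inv_gram[OF assms(1)] W_def[symmetric] frob_def
    by (simp add: matrix_transpose_mul)
  also have "\<dots> = trace (transpose W ** Y ** W)"
    by (metis matrix_mul_assoc trace_mul_sym)
  finally show ?thesis using trace_quad_psd[OF assms(2)] by simp
qed

lemma key_identity:
  fixes U X2 :: "'n::finite rmat"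
  assumes U: "invertible U" and pd2: "pd X2"
  defines "X1 \<equiv> transpose U ** U"
  defines "B \<equiv> (X2 - X1) ** matrix_inv U"
  shows "trace (transpose B ** matrix_inv X2 ** B)
         = frob (matrix_inv X1) X2 + frob (matrix_inv X2) X1 - 2 * real CARD('n)"
proof -
  define W where "W = matrix_inv U"
  define P1 where "P1 = W ** transpose W"
  define P2 where "P2 = matrix_inv X2"
  define D where "D = X2 - X1"
  have inv2: "invertible X2" using pd_invertible[OF pd2] .
  have sym2: "sym_mat X2" using pd2 pd_def by blast
  have sym1: "sym_mat X1" unfolding X1_def by (simp add: sym_mat_def matrix_transpose_mul)
  have P1inv: "matrix_inv X1 = P1" unfolding X1_def P1_def W_def by (rule inv_gram[OF U])
  have inv1: "invertible X1" unfolding X1_def using invertible_mult[OF transpose_invertible[OF U] U] .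
  have X1P1: "X1 ** P1 = mat 1" using inv_props(1)[OF inv1] P1inv by simp
  have X2P2: "X2 ** P2 = mat 1" "P2 ** X2 = mat 1" using inv_props[OF inv2] P2_def by auto
  have symP1: "sym_mat P1" unfolding P1_def by (simp add: sym_mat_def matrix_transpose_mul)
  have symP2: "sym_mat P2" unfolding P2_def using sym_inv[OF sym2 inv2] .
  have symD: "sym_mat D" unfolding D_def using sym_diff[OF sym2 sym1] .
  have tB: "transpose B = transpose W ** D"
    unfolding B_def W_def[symmetric] D_def[symmetric] using symD by (simp add: matrix_transpose_mul sym_mat_def)
  have "trace (transpose B ** P2 ** B) = trace (transpose W ** (D ** P2 ** D) ** W)"
  proof -
    have "B = D ** W" by (simp add: B_def D_def W_def)
    then show ?thesis using tB by (simp add: matrix_mul_assoc)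
  qed
  also have "\<dots> = trace (D ** P2 ** D ** P1)"
    unfolding P1_def by (metis matrix_mul_assoc trace_mul_sym)
  also have "D ** P2 ** D ** P1 = X2 ** P1 - 2 *\<^sub>R mat 1 + X1 ** P2"
  proof -
    have h1: "D ** P2 = mat 1 - X1 ** P2" unfolding D_def by (simp add: mm_diff_right X2P2)
    have h2: "(mat 1 - X1 ** P2) ** D = X2 - 2 *\<^sub>R X1 + X1 ** P2 ** X1"
    proof -
      have "X1 ** P2 ** X2 = X1" by (metis X2P2(2) matrix_mul_assoc matrix_mul_rid)
      then show ?thesis unfolding D_def
        by (simp add: mm_diff_right mm_diff_left scaleR_2 algebra_simps)
    qed
    have h3: "(X2 - 2 *\<^sub>R X1 + X1 ** P2 ** X1) ** P1 = X2 ** P1 - 2 *\<^sub>R mat 1 + X1 ** P2"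
    proof -
      have "X1 ** P2 ** X1 ** P1 = X1 ** P2" by (metis X1P1 matrix_mul_assoc matrix_mul_rid)
      then show ?thesis
        by (simp add: mm_diff_right mm_add_right mm_scale_left X1P1)
    qed
    show ?thesis using h1 h2 h3 by simp
  qed
  also have "trace (X2 ** P1 - 2 *\<^sub>R mat 1 + X1 ** P2) = trace (X2 ** P1) - 2 * real CARD('n) + trace (X1 ** P2)"
    by (simp only: trace_add trace_sub trace_scale trace_I)
  also have "trace (X2 ** P1) = frob P1 X2" using frob_trace_sym[OF symP1, of X2] trace_mul_sym[of X2 P1] by simp
  also have "trace (X1 ** P2) = frob P2 X1" using frob_trace_sym[OF symP2, of X1] trace_mul_sym[of X1 P2] by simp
  finally show ?thesis unfolding P1inv[symmetric] P2_def by simp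
qed

lemma key_unique:
  fixes U X2 :: "'n::finite rmat"
  assumes U: "invertible U" and pd2: "pd X2"
  defines "X1 \<equiv> transpose U ** U"
  shows "2 * real CARD('n) \<le> frob (matrix_inv X1) X2 + frob (matrix_inv X2) X1"
    and "frob (matrix_inv X1) X2 + frob (matrix_inv X2) X1 = 2 * real CARD('n) \<Longrightarrow> X1 = X2"
proof -
  define B where "B = (X2 - X1) ** matrix_inv U"
  have e: "trace (transpose B ** matrix_inv X2 ** B)
         = frob (matrix_inv X1) X2 + frob (matrix_inv X2) X1 - 2 * real CARD('n)"
    unfolding B_def X1_def by (rule key_identity[OF U pd2])
  have pdi: "pd (matrix_inv X2)" using pd_inv[OF pd2] .
  show "2 * real CARD('n) \<le> frob (matrix_inv X1) X2 + frob (matrix_inv X2) X1"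
    using trace_quad_psd[OF pd_psd[OF pdi], of B] e by simp
  assume "frob (matrix_inv X1) X2 + frob (matrix_inv X2) X1 = 2 * real CARD('n)"
  then have "B = 0" using trace_quad_pd_zero[OF pdi, of B] e by simp
  then have "(X2 - X1) ** (matrix_inv U ** U) = 0" unfolding B_def by (simp add: matrix_mul_assoc)
  then have "X2 - X1 = 0" using inv_props(2)[OF U] by simp
  then show "X1 = X2" by simp
qed

lemma pd_id_plus:
  fixes E :: "'n::finite rmat"
  assumes "sym_mat E" "norm E < 1"
  shows "pd (mat 1 + E)"
  unfolding pd_def
proof (intro conjI allI impI)
  show "sym_mat (mat 1 + E)" using sym_add[OF sym_id assms(1)] .
  fix v :: "real^'n" assume v: "v \<noteq> 0"
  have "\<bar>v \<bullet> (E *v v)\<bar> \<le> norm v * norm (E *v v)" by (rule Cauchy_Schwarz_ineq2)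
  also have "\<dots> \<le> norm v * (norm E * norm v)" by (simp add: mult_left_mono norm_mat_vec)
  finally have a: "\<bar>v \<bullet> (E *v v)\<bar> \<le> norm E * (norm v)^2" by (simp add: power2_eq_square mult_ac)
  have "norm E * (norm v)^2 < (norm v)^2" using assms(2) v by simp
  then have "0 < v \<bullet> v + v \<bullet> (E *v v)" using a by (simp add: power2_norm_eq_inner)
  then show "0 < v \<bullet> ((mat 1 + E) *v v)"
    by (simp add: matrix_vector_mult_add_rdistrib inner_add_right)
qed

lemma pd_congr:
  fixes P U :: "'n::finite rmat"
  assumes "pd P" "invertible U"
  shows "pd (transpose U ** P ** U)"
  unfolding pd_def
proof (intro conjI allI impI)
  show "sym_mat (transpose U ** P ** U)" using sym_congr assms pd_def by blast
  fix v :: "real^'n" assume v: "v \<noteq> 0"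
  have "U *v v \<noteq> 0"
  proof
    assume "U *v v = 0"
    then have "matrix_inv U *v (U *v v) = 0" by simp
    then show False using v by (simp add: matrix_vector_mul_assoc inv_props(2)[OF assms(2)])
  qed
  then have "0 < (U *v v) \<bullet> (P *v (U *v v))" using assms(1) pd_def by blast
  also have "(U *v v) \<bullet> (P *v (U *v v)) = v \<bullet> ((transpose U ** P ** U) *v v)"
  proof -
    have "v \<bullet> ((transpose U ** P ** U) *v v) = v \<bullet> (transpose U *v (P *v (U *v v)))"
      by (simp only: matrix_vector_mul_assoc matrix_mul_assoc)
    also have "\<dots> = (U *v v) \<bullet> (P *v (U *v v))"
      by (simp only: inner_mat_transpose transpose_transpose)
    finally show ?thesis by simp
  qed
  finally show "0 < v \<bullet> ((transpose U ** P ** U) *v v)" .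
qed

lemma perm_not_id_prod:
  assumes p: "p permutes (UNIV :: 'n::finite set)" and ne: "p \<noteq> id"
  shows "(\<Prod>i\<in>UNIV - {j}. (if i = p i then 1 else 0 :: real)) = 0"
proof -
  obtain a where a: "p a \<noteq> a" using ne by (metis eq_id_iff)
  have "\<exists>b. b \<noteq> j \<and> p b \<noteq> b"
  proof (cases "a = j")
    case False then show ?thesis using a by blast
  next
    case True
    have "p (p j) \<noteq> p j"
    proof
      assume "p (p j) = p j"
      then have "p j = j" using permutes_inj[OF p] by (simp add: inj_eq)
      then show False using a True by simp
    qed
    moreover have "p j \<noteq> j" using a True by simp
    ultimately show ?thesis by blast
  qed
  then obtain b where b: "b \<noteq> j" "p b \<noteq> b" by blast
  show ?thesis
    apply (rule prod_zero)
     apply simp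
    apply (rule bexI[of _ b])
    using b by auto
qed

lemma det_deriv:
  fixes E :: "'n::finite rmat"
  shows "((\<lambda>s. det (mat 1 + s *\<^sub>R E)) has_real_derivative trace E) (at 0)"
proof -
  define P where "P = {p. p permutes (UNIV :: 'n set)}"
  define f where "f = (\<lambda>p s. of_int (sign p) * (\<Prod>i\<in>UNIV. (if i = p i then 1 else 0) + s * E$i$(p i)) :: real)"
  define f' where "f' = (\<lambda>p. of_int (sign p) * (\<Sum>j\<in>UNIV. E$j$(p j) * (\<Prod>i\<in>UNIV-{j}. (if i = p i then 1 else 0) + 0 * E$i$(p i))) :: real)"
  have eq: "(\<lambda>s. det (mat 1 + s *\<^sub>R E)) = (\<lambda>s. \<Sum>p\<in>P. f p s)"
    unfolding det_def P_def f_def by (simp add: mat_def)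
  have d: "(f p has_real_derivative f' p) (at 0)" for p
    unfolding f_def f'_def
    by (intro DERIV_cmult has_field_derivative_prod) (auto intro!: derivative_eq_intros)
  have "((\<lambda>s. \<Sum>p\<in>P. f p s) has_real_derivative (\<Sum>p\<in>P. f' p)) (at 0)"
    by (rule DERIV_sum) (use d in auto)
  moreover have "(\<Sum>p\<in>P. f' p) = (\<Sum>p\<in>P. if p = id then trace E else 0)"
  proof (rule sum.cong)
    fix p assume pP: "p \<in> P"
    show "f' p = (if p = id then trace E else 0)"
    proof (cases "p = id")
      case True then show ?thesis unfolding f'_def trace_def by simp
    next
      case False
      have z: "(\<Prod>i\<in>UNIV-{j}. (if i = p i then 1 else 0) + 0 * E$i$(p i)) = (0::real)" for j
      proof -
        have "(\<Prod>i\<in>UNIV-{j}. (if i = p i then 1 else 0) + 0 * E$i$(p i))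
              = (\<Prod>i\<in>UNIV-{j}. (if i = p i then 1 else 0 :: real))" by simp
        also have "\<dots> = 0" using perm_not_id_prod[of p j] pP False unfolding P_def by simp
        finally show ?thesis .
      qed
      show ?thesis unfolding f'_def by (simp only: z) (use False in simp)
    qed
  qed simp
  moreover have "(\<Sum>p\<in>P. if p = id then trace E else 0) = trace E"
    by (simp add: P_def permutes_id)
  ultimately show ?thesis unfolding eq by simp
qed

lemma exists_det_gt:
  fixes E :: "'n::finite rmat"
  assumes "trace E \<noteq> 0"
  shows "\<exists>s. \<bar>s\<bar> * (norm E + 1) < 1 \<and> 1 < det (mat 1 + s *\<^sub>R E)"
proof -
  let ?c = "norm E + 1"
  have cpos: "0 < ?c" by (simp add: add_nonneg_pos)
  show ?thesis
  proof (cases "trace E > 0")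
    case True
    from DERIV_pos_inc_right[OF det_deriv[of E] True]
    obtain d where d: "d > 0" "\<forall>h>0. h < d \<longrightarrow> det (mat 1 + 0 *\<^sub>R E) < det (mat 1 + (0 + h) *\<^sub>R E)"
      by blast
    define h where "h = min (d/2) (1 / (2 * ?c))"
    have hpos: "h > 0" using d cpos by (simp add: h_def)
    have hd: "h < d" using d by (simp add: h_def)
    have "h * ?c \<le> (1 / (2 * ?c)) * ?c" unfolding h_def by (intro mult_right_mono) (use cpos in auto)
    also have "\<dots> = 1/2" using cpos by simp
    finally have "\<bar>h\<bar> * ?c < 1" using hpos by simp
    moreover have "1 < det (mat 1 + h *\<^sub>R E)" using d(2) hpos hd by simp
    ultimately show ?thesis by blast
  next
    case False
    then have neg: "trace E < 0" using assms by simp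
    from DERIV_neg_dec_left[OF det_deriv[of E] neg]
    obtain d where d: "d > 0" "\<forall>h>0. h < d \<longrightarrow> det (mat 1 + 0 *\<^sub>R E) < det (mat 1 + (0 - h) *\<^sub>R E)"
      by blast
    define h where "h = min (d/2) (1 / (2 * ?c))"
    have hpos: "h > 0" using d cpos by (simp add: h_def)
    have hd: "h < d" using d by (simp add: h_def)
    have "h * ?c \<le> (1 / (2 * ?c)) * ?c" unfolding h_def by (intro mult_right_mono) (use cpos in auto)
    also have "\<dots> = 1/2" using cpos by simp
    finally have "\<bar>-h\<bar> * ?c < 1" using hpos by simp
    moreover have "1 < det (mat 1 + (-h) *\<^sub>R E)" using d(2) hpos hd by simp
    ultimately show ?thesis by blast
  qed
qed

lemma first_order:
  fixes U D :: "'n::finite rmat"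
  assumes U: "invertible U" and symD: "sym_mat D"
    and max: "\<And>s. pd (transpose U ** U + s *\<^sub>R D) \<Longrightarrow>
                ln (det (transpose U ** U + s *\<^sub>R D)) \<le> ln (det (transpose U ** U))"
  shows "frob (matrix_inv (transpose U ** U)) D = 0"
proof (rule ccontr)
  assume ne: "frob (matrix_inv (transpose U ** U)) D \<noteq> 0"
  define W where "W = matrix_inv U"
  define E where "E = transpose W ** D ** W"
  define X where "X = transpose U ** U"
  have WU: "W ** U = mat 1" "U ** W = mat 1" using inv_props[OF U] W_def by auto
  have tWU: "transpose U ** transpose W = mat 1"
    using WU(1) by (metis matrix_transpose_mul transpose_mat)
  have symE: "sym_mat E" unfolding E_def using sym_congr[OF symD] .
  have trE: "trace E = frob (matrix_inv X) D"
  proof -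
    have "trace E = trace (D ** W ** transpose W)"
      unfolding E_def by (metis matrix_mul_assoc trace_mul_sym)
    also have "\<dots> = trace ((W ** transpose W) ** D)"
      by (metis matrix_mul_assoc trace_mul_sym)
    also have "W ** transpose W = matrix_inv X" unfolding X_def W_def by (rule inv_gram[OF U, symmetric])
    also have "trace (matrix_inv X ** D) = frob (matrix_inv X) D"
    proof -
      have "sym_mat X" unfolding X_def by (simp add: sym_mat_def matrix_transpose_mul)
      moreover have "invertible X" unfolding X_def using invertible_mult[OF transpose_invertible[OF U] U] .
      ultimately show ?thesis using frob_trace_sym[OF sym_inv] by metis
    qed
    finally show ?thesis .
  qed
  have decomp: "transpose U ** (mat 1 + s *\<^sub>R E) ** U = X + s *\<^sub>R D" for s
  proof -
    have "transpose U ** E ** U = (transpose U ** transpose W) ** D ** (W ** U)"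
      unfolding E_def by (simp add: matrix_mul_assoc)
    also have "\<dots> = D" by (simp add: tWU WU)
    finally have "transpose U ** E ** U = D" .
    then show ?thesis unfolding X_def
      by (simp add: mm_add_left mm_add_right mm_scale_left mm_scale_right matrix_mul_assoc)
  qed
  have detX: "det X = (det U)^2" unfolding X_def by (simp add: det_mul power2_eq_square)
  have detU: "det U \<noteq> 0" using U invertible_det_nz by blast
  have detXpos: "0 < det X" using detX detU by simp
  obtain s where s: "\<bar>s\<bar> * (norm E + 1) < 1" "1 < det (mat 1 + s *\<^sub>R E)"
  proof -
    have "trace E \<noteq> 0" using ne trE unfolding X_def by simp
    then show ?thesis using exists_det_gt[of E] that by blast
  qed
  have "norm (s *\<^sub>R E) < 1"
  proof -
    have "norm (s *\<^sub>R E) = \<bar>s\<bar> * norm E" by simp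
    also have "\<dots> \<le> \<bar>s\<bar> * (norm E + 1)" by (simp add: mult_left_mono)
    finally show ?thesis using s(1) by simp
  qed
  then have "pd (mat 1 + s *\<^sub>R E)" using pd_id_plus sym_scale[OF symE] by blast
  then have pdY: "pd (X + s *\<^sub>R D)" using pd_congr[OF _ U] decomp by metis
  have "det (X + s *\<^sub>R D) = det X * det (mat 1 + s *\<^sub>R E)"
    unfolding decomp[symmetric] by (simp add: det_mul detX power2_eq_square)
  then have "det X < det (X + s *\<^sub>R D)" using s(2) detXpos by simp
  then have "ln (det X) < ln (det (X + s *\<^sub>R D))" using detXpos by simp
  then show False using max[of s] pdY unfolding X_def by simp
qed

definition ON :: "'n::finite rmat \<Rightarrow> nat \<Rightarrow> (nat \<Rightarrow> 'n rmat) \<Rightarrow> bool" where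
  "ON C M A \<longleftrightarrow> C \<bullet> C = 1 \<and> (\<forall>i<M. A i \<bullet> C = 0) \<and> (\<forall>i<M. \<forall>j<M. A i \<bullet> A j = (if i = j then 1 else 0))"

lemma ON_intro:
  assumes orthA: "\<forall>i<M. \<forall>j<M. i \<noteq> j \<longrightarrow> frob (A i) (A j) = 0"
    and orthC: "\<forall>i<M. frob (A i) C = 0"
    and normC: "frob_norm C = 1" and normA: "\<forall>i<M. frob_norm (A i) = 1"
  shows "ON C M A"
proof -
  have "C \<bullet> C = 1" using normC unfolding frob_norm_def frob_inner by simp
  moreover have "\<forall>i<M. A i \<bullet> A i = 1" using normA unfolding frob_norm_def frob_inner by simp
  ultimately show ?thesis unfolding ON_def using orthA orthC unfolding frob_inner by auto
qed

lemma ON_sum_A: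
  assumes "ON C M A" "j < M"
  shows "A j \<bullet> (\<Sum>i<M. c i *\<^sub>R A i) = c j"
proof -
  have "A j \<bullet> (\<Sum>i<M. c i *\<^sub>R A i) = (\<Sum>i<M. c i * (A j \<bullet> A i))"
    by (simp add: inner_sum_right)
  also have "\<dots> = (\<Sum>i<M. if i = j then c i else 0)"
    by (rule sum.cong) (use assms in \<open>auto simp: ON_def\<close>)
  also have "\<dots> = c j" using assms(2) by simp
  finally show ?thesis .
qed

lemma ON_sum_C:
  assumes "ON C M A"
  shows "C \<bullet> (\<Sum>i<M. c i *\<^sub>R A i) = 0"
proof -
  have "C \<bullet> (\<Sum>i<M. c i *\<^sub>R A i) = (\<Sum>i<M. c i * (C \<bullet> A i))"
    by (simp add: inner_sum_right)
  also have "\<dots> = 0" using assms by (simp add: ON_def inner_commute)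
  finally show ?thesis .
qed

lemma ON_S:
  fixes c :: "nat \<Rightarrow> real"
  assumes "ON C M A"
  defines "S \<equiv> C - (\<Sum>i<M. c i *\<^sub>R A i)"
  shows "S \<bullet> C = 1" "\<And>j. j < M \<Longrightarrow> S \<bullet> A j = - c j" "S \<bullet> S = 1 + (\<Sum>i<M. (c i)^2)"
proof -
  show SC: "S \<bullet> C = 1" unfolding S_def using assms(1) ON_sum_C[OF assms(1), of c]
    by (simp add: inner_diff_left inner_diff_right ON_def inner_commute)
  show SA: "S \<bullet> A j = - c j" if "j < M" for j unfolding S_def using assms(1) ON_sum_A[OF assms(1) that, of c] that
    by (simp add: inner_diff_left inner_diff_right ON_def inner_commute)
  have "S \<bullet> S = S \<bullet> C - (\<Sum>i<M. c i * (S \<bullet> A i))"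
  proof -
    have e: "S \<bullet> S = S \<bullet> C - S \<bullet> (\<Sum>i<M. c i *\<^sub>R A i)"
      using inner_diff_right[of S C "(\<Sum>i<M. c i *\<^sub>R A i)"] by (simp only: S_def[symmetric])
    show ?thesis unfolding e by (simp add: inner_sum_right)
  qed
  also have "(\<Sum>i<M. c i * (S \<bullet> A i)) = (\<Sum>i<M. -((c i)^2))"
    by (rule sum.cong) (simp_all add: SA power2_eq_square)
  finally show "S \<bullet> S = 1 + (\<Sum>i<M. (c i)^2)" using SC by (simp add: sum_negf)
qed

lemma kkt_repr:
  fixes U C :: "'n::finite rmat"
  assumes on: "ON C M A" and symC: "sym_mat C" and symA: "\<forall>i<M. sym_mat (A i)"
    and U: "invertible U"
    and max: "\<forall>Y. pd Y \<and> (\<forall>i<M. frob (A i) Y = frob (A i) (transpose U ** U)) \<and> frob C Y = frob C (transpose U ** U)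
               \<longrightarrow> ln (det Y) \<le> ln (det (transpose U ** U))"
  shows "matrix_inv (transpose U ** U) = frob C (matrix_inv (transpose U ** U)) *\<^sub>R C
            + (\<Sum>i<M. frob (A i) (matrix_inv (transpose U ** U)) *\<^sub>R A i)"
proof -
  define X where "X = transpose U ** U"
  define P where "P = matrix_inv X"
  define l where "l = C \<bullet> P"
  define mu where "mu = (\<lambda>i. A i \<bullet> P)"
  define D where "D = P - l *\<^sub>R C - (\<Sum>i<M. mu i *\<^sub>R A i)"
  have symX: "sym_mat X" unfolding X_def by (simp add: sym_mat_def matrix_transpose_mul)
  have invX: "invertible X" unfolding X_def using invertible_mult[OF transpose_invertible[OF U] U] .
  have symP: "sym_mat P" unfolding P_def using sym_inv[OF symX invX] .
  have symD: "sym_mat D" unfolding D_def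
    by (intro sym_diff symP sym_scale symC sym_sum) (use symA in auto)
  have DA: "A j \<bullet> D = 0" if "j < M" for j
  proof -
    have "A j \<bullet> D = A j \<bullet> P - l * (A j \<bullet> C) - A j \<bullet> (\<Sum>i<M. mu i *\<^sub>R A i)"
      unfolding D_def by (simp add: inner_diff_right)
    also have "\<dots> = 0" using ON_sum_A[OF on that, of mu] on that by (simp add: ON_def mu_def)
    finally show ?thesis .
  qed
  have DC: "C \<bullet> D = 0"
  proof -
    have "C \<bullet> D = C \<bullet> P - l * (C \<bullet> C) - C \<bullet> (\<Sum>i<M. mu i *\<^sub>R A i)"
      unfolding D_def by (simp add: inner_diff_right)
    also have "\<dots> = 0" using ON_sum_C[OF on, of mu] on by (simp add: ON_def l_def)
    finally show ?thesis .
  qed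
  have "frob (matrix_inv (transpose U ** U)) D = 0"
  proof (rule first_order[OF U symD])
    fix s assume pd: "pd (transpose U ** U + s *\<^sub>R D)"
    show "ln (det (transpose U ** U + s *\<^sub>R D)) \<le> ln (det (transpose U ** U))"
    proof (rule max[rule_format], intro conjI allI impI)
      show "pd (transpose U ** U + s *\<^sub>R D)" by fact
      fix i assume "i < M"
      then show "frob (A i) (transpose U ** U + s *\<^sub>R D) = frob (A i) (transpose U ** U)"
        using DA unfolding frob_inner by (simp add: inner_add_right)
    next
      show "frob C (transpose U ** U + s *\<^sub>R D) = frob C (transpose U ** U)"
        using DC unfolding frob_inner by (simp add: inner_add_right)
    qed
  qed
  then have PD: "P \<bullet> D = 0" unfolding P_def X_def frob_inner .
  have "D \<bullet> D = P \<bullet> D - l * (C \<bullet> D) - (\<Sum>i<M. mu i * (A i \<bullet> D))"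
  proof -
    have e: "D \<bullet> D = (P - l *\<^sub>R C - (\<Sum>i<M. mu i *\<^sub>R A i)) \<bullet> D"
      by (simp only: D_def[symmetric])
    show ?thesis unfolding e by (simp add: inner_diff_left inner_sum_left)
  qed
  also have "\<dots> = 0" using PD DC DA by simp
  finally have "D = 0" by simp
  then have "P = l *\<^sub>R C + (\<Sum>i<M. mu i *\<^sub>R A i)" unfolding D_def by (simp add: algebra_simps)
  then show ?thesis unfolding P_def X_def l_def mu_def frob_inner by simp
qed

lemma frob_row_col:
  fixes F :: "'n::finite rmat"
  assumes "sym_mat F"
  shows "(F$i$i)^2 + 2 * (\<Sum>j\<in>UNIV-{i}. (F$i$j)^2) \<le> (norm F)^2"
proof -
  have symF: "F$a$b = F$b$a" for a b using assms unfolding sym_mat_def by (metis transpose_def vec_lambda_beta)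
  have rowi: "(\<Sum>j\<in>UNIV. (F$i$j)^2) = (F$i$i)^2 + (\<Sum>j\<in>UNIV-{i}. (F$i$j)^2)"
    by (simp add: sum.remove[of UNIV i])
  have A: "(norm F)^2 = (\<Sum>b\<in>UNIV. (F$i$b)^2) + (\<Sum>a\<in>UNIV-{i}. \<Sum>b\<in>UNIV. (F$a$b)^2)"
    unfolding norm_sq_mat by (simp add: sum.remove[of UNIV i])
  have "(\<Sum>a\<in>UNIV-{i}. \<Sum>b\<in>UNIV. (F$a$b)^2) \<ge> (\<Sum>a\<in>UNIV-{i}. (F$a$i)^2)"
    by (intro sum_mono member_le_sum) auto
  then have B: "(\<Sum>a\<in>UNIV-{i}. \<Sum>b\<in>UNIV. (F$a$b)^2) \<ge> (\<Sum>j\<in>UNIV-{i}. (F$i$j)^2)"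
    by (simp add: symF)
  show ?thesis using A B rowi by linarith
qed

lemma dd_ball:
  fixes F :: "'n::finite rmat"
  assumes symF: "sym_mat F" and nF: "(norm F)^2 \<le> \<Phi>" and Phi: "\<Phi> \<le> 2 / (real CARD('n) + 1)"
  shows "dd (mat 1 + F)"
  unfolding dd_def
proof (intro conjI allI)
  show "sym_mat (mat 1 + F)" using sym_add[OF sym_id symF] .
  fix i
  define N where "N = real CARD('n)"
  define x where "x = F$i$i"
  define s where "s = (\<Sum>j\<in>UNIV-{i}. \<bar>F$i$j\<bar>)"
  define q where "q = (\<Sum>j\<in>UNIV-{i}. (F$i$j)^2)"
  have N1: "N \<ge> 1" unfolding N_def by (simp add: Suc_leI)
  have cardi: "card (UNIV - {i}) = CARD('n) - 1" by (simp add: card_Diff_singleton)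
  have s2: "s^2 \<le> (N - 1) * q"
  proof -
    have "s^2 \<le> (\<Sum>j\<in>UNIV-{i}. \<bar>F$i$j\<bar>^2) * card (UNIV - {i})"
      unfolding s_def by (rule sum_squared_le_sum_of_squares)
    also have "\<dots> = q * (N - 1)" unfolding q_def N_def cardi
      by (simp add: of_nat_diff Suc_leI)
    finally show ?thesis by (simp add: mult.commute)
  qed
  have xq: "x^2 + 2 * q \<le> \<Phi>" using frob_row_col[OF symF, of i] nF unfolding x_def q_def by simp
  have q0: "q \<ge> 0" unfolding q_def by (simp add: sum_nonneg)
  have s0: "s \<ge> 0" unfolding s_def by (simp add: sum_nonneg)
  have "2 / (N + 1) \<le> 1" using N1 by (simp add: divide_le_eq)
  then have Phi1: "\<Phi> \<le> 1" using Phi unfolding N_def by linarith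
  have x1: "x^2 \<le> 1" using xq q0 Phi1 by linarith
  have x1': "1 + x \<ge> 0"
  proof -
    have "\<bar>x\<bar> \<le> 1" using x1 by (simp add: abs_square_le_1) 
    then show ?thesis by simp
  qed
  have key: "(N - 1) * q \<le> (1 + x)^2"
  proof -
    have "(N + 1) * \<Phi> \<le> 2" using Phi N1 unfolding N_def[symmetric] by (simp add: le_divide_eq mult.commute)
    moreover have "(N + 1) * (x^2 + 2 * q) \<le> (N + 1) * \<Phi>" using xq N1 by (intro mult_left_mono) auto
    ultimately have "(N + 1) * (x^2 + 2 * q) \<le> 2" by linarith
    then have a: "2 * (N + 1) * q \<le> 2 - (N + 1) * x^2" by (simp add: algebra_simps)
    have "2 * (N + 1) * ((N - 1) * q) = (N - 1) * (2 * (N + 1) * q)" by (simp add: algebra_simps)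
    also have "\<dots> \<le> (N - 1) * (2 - (N + 1) * x^2)" using a N1 by (intro mult_left_mono) auto
    also have "\<dots> \<le> 2 * (N + 1) * (1 + x)^2"
    proof -
      have "0 \<le> ((N + 1) * x + 2)^2" by simp
      then show ?thesis by (simp add: algebra_simps power2_eq_square)
    qed
    finally show ?thesis using N1 by (simp add: mult_le_cancel_left_pos)
  qed
  have "s^2 \<le> (1 + x)^2" using s2 key by linarith
  then have "s \<le> 1 + x" using s0 x1' by (simp add: power2_le_iff_abs_le)
  moreover have "(\<Sum>j\<in>UNIV - {i}. \<bar>(mat 1 + F)$i$j\<bar>) = s" unfolding s_def
    by (rule sum.cong) (auto simp: mat_def)
  moreover have "(mat 1 + F)$i$i = 1 + x" unfolding x_def by (simp add: mat_def)
  ultimately show "(\<Sum>j\<in>UNIV - {i}. \<bar>(mat 1 + F)$i$j\<bar>) \<le> (mat 1 + F)$i$i" by simp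
qed

lemma diag_mat_mult:
  fixes Y :: "'n::finite rmat"
  shows "(diag_mat d ** Y ** diag_mat d)$i$j = d$i * Y$i$j * d$j"
proof -
  have "(diag_mat d ** Y)$i$k = d$i * Y$i$k" for k
    unfolding matrix_matrix_mult_def diag_mat_def
    by (simp add: if_distrib if_distribR sum.delta cong: if_cong)
  note h = this
  have "(diag_mat d ** Y ** diag_mat d)$i$j = (\<Sum>k\<in>UNIV. (diag_mat d ** Y)$i$k * (diag_mat d)$k$j)"
    by (simp add: matrix_matrix_mult_def)
  also have "\<dots> = (\<Sum>k\<in>UNIV. if k = j then d$i * Y$i$k * d$j else 0)"
    unfolding h by (intro sum.cong refl) (simp add: diag_mat_def)
  also have "\<dots> = d$i * Y$i$j * d$j" by simp
  finally show ?thesis .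
qed

lemma sdd_ball:
  fixes F :: "'n::finite rmat"
  assumes symF: "sym_mat F" and nF: "norm F < 1"
  shows "sdd (mat 1 + F)"
proof -
  have symF': "F$a$b = F$b$a" for a b using symF unfolding sym_mat_def by (metis transpose_def vec_lambda_beta)
  define G :: "'n rmat" where "G = (\<chi> i j. if i = j then F$i$j else - \<bar>F$i$j\<bar>)"
  define Mm where "Mm = mat 1 + G"
  have symG: "sym_mat G" unfolding sym_mat_def G_def transpose_def by (simp add: vec_eq_iff symF')
  have nG: "norm G = norm F"
  proof -
    have "(norm G)^2 = (norm F)^2" unfolding norm_sq_mat G_def by (intro sum.cong refl) (simp add: power2_abs)
    then show ?thesis by (simp add: power2_eq_iff_nonneg)
  qed
  have pdM: "pd Mm" unfolding Mm_def using pd_id_plus[OF symG] nF nG by simp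
  have Mij: "Mm$i$j = (if i = j then 1 + F$i$i else - \<bar>F$i$j\<bar>)" for i j
    unfolding Mm_def G_def by (simp add: mat_def)
  define one :: "real^'n" where "one = (\<chi> i. 1)"
  define z where "z = matrix_inv Mm *v one"
  have Mz: "Mm *v z = one" unfolding z_def
    by (simp add: matrix_vector_mul_assoc inv_props(1)[OF pd_invertible[OF pdM]])
  have Mzi: "(\<Sum>j\<in>UNIV. Mm$i$j * z$j) = 1" for i
    using Mz unfolding one_def matrix_vector_mult_def by (simp add: vec_eq_iff)
  define p :: "real^'n" where "p = (\<chi> i. max 0 (z$i))"
  define n :: "real^'n" where "n = (\<chi> i. max 0 (- z$i))"
  have zpn: "z = p - n" unfolding p_def n_def by (simp add: vec_eq_iff max_def)
  have "n \<bullet> (Mm *v z) = (\<Sum>i\<in>UNIV. n$i)" unfolding Mz one_def inner_vec_def by simp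
  moreover have "(\<Sum>i\<in>UNIV. n$i) \<ge> 0" unfolding n_def by (simp add: sum_nonneg)
  ultimately have h1: "n \<bullet> (Mm *v z) \<ge> 0" by simp
  have h2: "n \<bullet> (Mm *v p) \<le> 0"
  proof -
    have "n \<bullet> (Mm *v p) = (\<Sum>i\<in>UNIV. \<Sum>j\<in>UNIV. n$i * Mm$i$j * p$j)"
      by (simp add: inner_vec_def matrix_vector_mult_def sum_distrib_left mult_ac)
    also have "\<dots> \<le> 0"
    proof (intro sum_nonpos)
      fix i j
      show "n$i * Mm$i$j * p$j \<le> 0"
      proof (cases "i = j")
        case True
        have "n$i * p$i = 0" unfolding n_def p_def by (simp add: max_def)
        then show ?thesis using True by (metis mult.commute mult_zero_left mult.assoc order_refl)
      next
        case False
        have "n$i \<ge> 0" "p$j \<ge> 0" unfolding n_def p_def by simp_all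
        moreover have "Mm$i$j \<le> 0" using False Mij by simp
        ultimately show ?thesis by (simp add: mult_nonneg_nonpos mult_nonpos_nonneg)
      qed
    qed
    finally show ?thesis .
  qed
  have "n \<bullet> (Mm *v z) = n \<bullet> (Mm *v p) - n \<bullet> (Mm *v n)"
    unfolding zpn by (simp add: matrix_vector_mult_diff_distrib inner_diff_right)
  then have "n \<bullet> (Mm *v n) \<le> 0" using h1 h2 by linarith
  then have "n = 0" using pdM unfolding pd_def by (meson not_less)
  then have z0: "z$i \<ge> 0" for i
  proof -
    have "n$i = 0" using \<open>n = 0\<close> by simp
    then show ?thesis unfolding n_def by (simp add: max_def split: if_splits)
  qed
  have zpos: "z$i > 0" for i
  proof -
    have "(\<Sum>j\<in>UNIV. Mm$i$j * z$j) = Mm$i$i * z$i + (\<Sum>j\<in>UNIV-{i}. Mm$i$j * z$j)"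
      by (simp add: sum.remove[of UNIV i])
    moreover have "(\<Sum>j\<in>UNIV-{i}. Mm$i$j * z$j) \<le> 0"
      by (intro sum_nonpos) (auto simp: Mij z0 mult_nonpos_nonneg)
    ultimately have "Mm$i$i * z$i \<ge> 1" using Mzi[of i] by linarith
    then have "z$i \<noteq> 0" by auto
    then show ?thesis using z0[of i] by simp
  qed
  define d :: "real^'n" where "d = (\<chi> i. 1 / z$i)"
  define Y :: "'n rmat" where "Y = (\<chi> i j. z$i * (mat 1 + F)$i$j * z$j)"
  have dpos: "\<forall>i. 0 < d$i" unfolding d_def using zpos by simp
  have eq: "mat 1 + F = diag_mat d ** Y ** diag_mat d"
  proof -
    have "(diag_mat d ** Y ** diag_mat d)$i$j = (mat 1 + F)$i$j" for i j
    proof -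
      have a: "z$i \<noteq> 0" "z$j \<noteq> 0" using zpos[of i] zpos[of j] by auto
      have "(diag_mat d ** Y ** diag_mat d)$i$j = (1 / z$i) * (z$i * (mat 1 + F)$i$j * z$j) * (1 / z$j)"
        by (simp add: diag_mat_mult d_def Y_def)
      also have "\<dots> = (mat 1 + F)$i$j" using a by (simp add: field_simps)
      finally show ?thesis .
    qed
    then show ?thesis by (simp add: vec_eq_iff)
  qed
  have ddY: "dd Y"
    unfolding dd_def
  proof (intro conjI allI)
    show "sym_mat Y" unfolding sym_mat_def Y_def transpose_def by (simp add: vec_eq_iff mat_def symF' mult_ac)
    fix i
    have "(\<Sum>j\<in>UNIV-{i}. \<bar>Y$i$j\<bar>) = z$i * (\<Sum>j\<in>UNIV-{i}. \<bar>F$i$j\<bar> * z$j)"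
      unfolding Y_def sum_distrib_left
      using zpos by (intro sum.cong refl) (auto simp: mat_def abs_mult abs_of_pos)
    also have "(\<Sum>j\<in>UNIV-{i}. \<bar>F$i$j\<bar> * z$j) \<le> (1 + F$i$i) * z$i"
    proof -
      have "(\<Sum>j\<in>UNIV. Mm$i$j * z$j) = (1 + F$i$i) * z$i - (\<Sum>j\<in>UNIV-{i}. \<bar>F$i$j\<bar> * z$j)"
        by (simp add: sum.remove[of UNIV i] Mij sum_negf)
      then show ?thesis using Mzi[of i] by linarith
    qed
    then have "z$i * (\<Sum>j\<in>UNIV-{i}. \<bar>F$i$j\<bar> * z$j) \<le> z$i * ((1 + F$i$i) * z$i)"
      using zpos[of i] by (simp add: mult_left_mono)
    also have "\<dots> = Y$i$i" unfolding Y_def by (simp add: mat_def)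
    finally show "(\<Sum>j\<in>UNIV-{i}. \<bar>Y$i$j\<bar>) \<le> Y$i$i" .
  qed
  show ?thesis unfolding sdd_def using dpos ddY eq by blast
qed

lemma frob_lin_repr:
  fixes X C :: "'n::finite rmat"
  assumes feas: "\<forall>i<M. frob (A i) X = b i"
  shows "frob (a *\<^sub>R C + (\<Sum>i<M. c i *\<^sub>R A i)) X = a * frob C X + (\<Sum>i<M. c i * b i)"
proof -
  have "frob (a *\<^sub>R C + (\<Sum>i<M. c i *\<^sub>R A i)) X = a * frob C X + (\<Sum>i<M. c i * frob (A i) X)"
    unfolding frob_inner by (simp add: inner_add_left inner_sum_left)
  also have "(\<Sum>i<M. c i * frob (A i) X) = (\<Sum>i<M. c i * b i)"
    using feas by (intro sum.cong) auto
  finally show ?thesis .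
qed

lemma central_repr:
  "t *\<^sub>R (C - (\<Sum>i<M. g i *\<^sub>R A i)) = t *\<^sub>R C + (\<Sum>i<M. (- t * g i) *\<^sub>R (A i :: 'n::finite rmat))"
  by (simp add: scaleR_diff_right scaleR_sum_right sum_negf)

lemma frob_central:
  fixes X C :: "'n::finite rmat"
  assumes feas: "\<forall>i<M. frob (A i) X = b i"
  shows "frob (t *\<^sub>R (C - (\<Sum>i<M. g i *\<^sub>R A i))) X = t * (frob C X - (\<Sum>i<M. g i * b i))"
  unfolding central_repr frob_lin_repr[OF feas] by (simp add: sum_negf right_diff_distrib sum_distrib_left mult.assoc)

lemma gram_pd:
  fixes U :: "'n::finite rmat"
  assumes "invertible U" shows "pd (transpose U ** U)"
proof -
  have "pd (mat 1 :: 'n rmat)" using pd_id_plus[of "0::'n rmat"] by (simp add: sym_mat_def transpose_def vec_eq_iff)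
  then show ?thesis using pd_congr[OF _ assms] by fastforce
qed

lemma sym_gram: "sym_mat (transpose U ** (U::'n::finite rmat))"
  by (simp add: sym_mat_def matrix_transpose_mul)

lemma gap_bound:
  fixes U C :: "'n::finite rmat"
  assumes U: "invertible U"
    and Zinv: "matrix_inv (transpose U ** U) = t *\<^sub>R (C - (\<Sum>i<M. g i *\<^sub>R A i))"
    and t: "t > 0"
    and feasZ: "sdp_feasible M A b (transpose U ** U)"
    and psdX: "psd X" and feasX: "sdp_feasible M A b X"
  shows "frob C (transpose U ** U) - real CARD('n) / t \<le> frob C X"
proof -
  define Z where "Z = transpose U ** U"
  have fZ: "\<forall>i<M. frob (A i) Z = b i" using feasZ unfolding sdp_feasible_def Z_def .
  have fX: "\<forall>i<M. frob (A i) X = b i" using feasX unfolding sdp_feasible_def .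
  have invZ: "invertible Z" unfolding Z_def using pd_invertible[OF gram_pd[OF U]] .
  have symZ: "sym_mat Z" unfolding Z_def by (rule sym_gram)
  have "real CARD('n) = frob (matrix_inv Z) Z" using frob_inv_self[OF symZ invZ] by simp
  also have "\<dots> = t * (frob C Z - (\<Sum>i<M. g i * b i))" unfolding Z_def Zinv frob_central[OF fZ[unfolded Z_def]] ..
  finally have e1: "real CARD('n) = t * (frob C Z - (\<Sum>i<M. g i * b i))" .
  have "0 \<le> frob (matrix_inv Z) X" unfolding Z_def by (rule frob_gram_psd[OF U psdX])
  also have "\<dots> = t * (frob C X - (\<Sum>i<M. g i * b i))" unfolding Z_def Zinv frob_central[OF fX] ..
  finally have e2: "0 \<le> frob C X - (\<Sum>i<M. g i * b i)" using t by (simp add: zero_le_mult_iff)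
  have "frob C Z - real CARD('n) / t = (\<Sum>i<M. g i * b i)" using e1 t by (simp add: field_simps)
  then show ?thesis using e2 unfolding Z_def by simp
qed

lemma cmp_identity:
  fixes U C Xt :: "'n::finite rmat"
  assumes U: "invertible U"
    and Zinv: "matrix_inv (transpose U ** U) = l *\<^sub>R C + (\<Sum>i<M. mu i *\<^sub>R A i)"
    and feasZ: "sdp_feasible M A b (transpose U ** U)"
    and pdX: "pd Xt" and feasX: "sdp_feasible M A b Xt"
    and Xinv: "matrix_inv Xt = t *\<^sub>R (C - (\<Sum>i<M. g i *\<^sub>R A i))"
  shows "frob (matrix_inv (transpose U ** U)) Xt + frob (matrix_inv Xt) (transpose U ** U)
          = 2 * real CARD('n) + (t - l) * (frob C (transpose U ** U) - frob C Xt)"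
proof -
  define Z where "Z = transpose U ** U"
  have fZ: "\<forall>i<M. frob (A i) Z = b i" using feasZ unfolding sdp_feasible_def Z_def .
  have fX: "\<forall>i<M. frob (A i) Xt = b i" using feasX unfolding sdp_feasible_def .
  have invZ: "invertible Z" unfolding Z_def using pd_invertible[OF gram_pd[OF U]] .
  have invX: "invertible Xt" using pd_invertible[OF pdX] .
  have symX: "sym_mat Xt" using pdX pd_def by blast
  have NZ: "real CARD('n) = l * frob C Z + (\<Sum>i<M. mu i * b i)"
  proof -
    have symZ: "sym_mat Z" unfolding Z_def by (rule sym_gram)
    have "real CARD('n) = frob (matrix_inv Z) Z" using frob_inv_self[OF symZ invZ] by simp
    also have "\<dots> = l * frob C Z + (\<Sum>i<M. mu i * b i)" unfolding Z_def Zinv by (rule frob_lin_repr[OF fZ[unfolded Z_def]])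
    finally show ?thesis .
  qed
  have a: "frob (matrix_inv Z) Xt = l * frob C Xt + (\<Sum>i<M. mu i * b i)"
    unfolding Z_def Zinv by (rule frob_lin_repr[OF fX])
  have NX: "real CARD('n) = t * (frob C Xt - (\<Sum>i<M. g i * b i))"
    using frob_inv_self[OF symX invX] Xinv frob_central[OF fX] by simp
  have c: "frob (matrix_inv Xt) Z = t * (frob C Z - (\<Sum>i<M. g i * b i))"
    unfolding Xinv by (rule frob_central[OF fZ])
  show ?thesis unfolding Z_def[symmetric] using NZ a NX c by (simp add: algebra_simps)
qed

lemma trace_sq_le: "trace ((Q::'n::finite rmat) ** Q) \<le> (norm Q)^2"
proof -
  have "trace (Q ** Q) = transpose Q \<bullet> Q" using frob_def[of "transpose Q" Q] frob_inner[of "transpose Q" Q] by simp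
  also have "\<dots> \<le> norm (transpose Q) * norm Q" by (rule norm_cauchy_schwarz)
  also have "\<dots> = (norm Q)^2" by (simp add: norm_transpose_mat power2_eq_square)
  finally show ?thesis .
qed

lemma step_bound:
  fixes U C Xd :: "'n::finite rmat"
  assumes on: "ON C M A" and symC: "sym_mat C" and U: "invertible U"
    and Zinv: "matrix_inv (transpose U ** U) = t *\<^sub>R (C - (\<Sum>i<M. g i *\<^sub>R A i))"
    and t: "t > 0"
    and feasZ: "sdp_feasible M A b (transpose U ** U)"
    and ball: "\<forall>F. sym_mat F \<and> norm F < R \<longrightarrow> mat 1 + F \<in> K"
    and R: "R > 0"
    and opt: "\<forall>X. \<forall>Y\<in>K. sdp_feasible M A b X \<and> X = transpose U ** Y ** U \<longrightarrow> frob C Xd \<le> frob C X"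
  shows "frob C Xd \<le> frob C (transpose U ** U) - R / (t * sqrt (1 + (\<Sum>i<M. (g i)^2)))"
proof -
  define S where "S = C - (\<Sum>i<M. g i *\<^sub>R A i)"
  define W where "W = matrix_inv U"
  define P where "P = matrix_inv (transpose U ** U)"
  define V where "V = transpose W ** C ** W"
  define v where "v = frob C (transpose U ** U)"
  define sg where "sg = sqrt (1 + (\<Sum>i<M. (g i)^2))"
  have WU: "W ** U = mat 1" "U ** W = mat 1" using inv_props[OF U] W_def by auto
  have tWU: "transpose U ** transpose W = mat 1"
    using WU(1) by (metis matrix_transpose_mul transpose_mat)
  have PW: "P = W ** transpose W" unfolding P_def W_def by (rule inv_gram[OF U])
  have PS: "P = t *\<^sub>R S" unfolding P_def S_def by (rule Zinv)
  have SC: "S \<bullet> C = 1" and SS: "S \<bullet> S = 1 + (\<Sum>i<M. (g i)^2)" unfolding S_def using ON_S[OF on] by auto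
  have CC: "C \<bullet> C = 1" using on ON_def by blast
  have normC: "norm C = 1" using CC by (simp add: norm_eq_sqrt_inner)
  have normS: "norm S = sg" unfolding sg_def using SS by (simp add: norm_eq_sqrt_inner)
  have sg0: "sg > 0" unfolding sg_def by (simp add: sum_nonneg add_pos_nonneg)
  have symV: "sym_mat V" unfolding V_def using sym_congr[OF symC] .
  have UVU: "transpose U ** V ** U = C"
  proof -
    have "transpose U ** V ** U = (transpose U ** transpose W) ** C ** (W ** U)"
      unfolding V_def by (simp add: matrix_mul_assoc)
    then show ?thesis by (simp add: tWU WU)
  qed
  have trV: "trace V = t"
  proof -
    have "trace V = trace (C ** W ** transpose W)" unfolding V_def by (metis matrix_mul_assoc trace_mul_sym)
    also have "\<dots> = frob C P" unfolding PW using frob_trace_sym[OF symC] by (simp add: matrix_mul_assoc)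
    also have "\<dots> = t * (C \<bullet> S)" unfolding PS frob_inner by simp
    also have "\<dots> = t" using SC by (simp add: inner_commute)
    finally show ?thesis .
  qed
  have V0: "V \<noteq> 0" using trV t by (auto simp: trace_def)
  have nV0: "norm V > 0" using V0 by simp
  have nVb: "norm V \<le> t * sg"
  proof -
    have "(norm V)^2 = trace (V ** V)"
      using symV by (simp add: frob_self[symmetric] frob_def sym_mat_def)
    also have "V ** V = transpose W ** (C ** P ** C) ** W"
      unfolding V_def PW by (simp add: matrix_mul_assoc)
    also have "trace \<dots> = trace ((C ** P ** C) ** (W ** transpose W))"
      by (metis matrix_mul_assoc trace_mul_sym)
    also have "\<dots> = trace ((C ** P) ** (C ** P))" unfolding PW[symmetric] by (simp add: matrix_mul_assoc)
    also have "\<dots> \<le> (norm (C ** P))^2" by (rule trace_sq_le)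
    also have "\<dots> \<le> (norm C * norm P)^2" by (intro power_mono norm_mat_mul) simp
    also have "\<dots> = (t * sg)^2" unfolding PS normC using t normS by simp
    finally have "(norm V)^2 \<le> (t * sg)^2" .
    then show ?thesis using t sg0 by (simp add: power2_le_iff_abs_le)
  qed
  have main: "frob C Xd \<le> v - r / norm V" if r: "0 \<le> r" "r < R" for r
  proof -
    define c where "c = r / norm V"
    define F where "F = (- c) *\<^sub>R V"
    have symF: "sym_mat F" unfolding F_def using sym_scale[OF symV, of "-c"] .
    have nF: "norm F = r" unfolding F_def c_def using nV0 r by simp
    have YK: "mat 1 + F \<in> K" using ball symF nF r by auto
    have X': "transpose U ** (mat 1 + F) ** U = transpose U ** U + (- c) *\<^sub>R C"
    proof -
      have "transpose U ** (mat 1 + F) ** U = transpose U ** U + transpose U ** F ** U"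
        by (simp only: mm_add_left mm_add_right matrix_mul_rid)
      also have "transpose U ** F ** U = (- c) *\<^sub>R C"
        unfolding F_def using UVU by (simp only: mm_scale_left mm_scale_right)
      finally show ?thesis .
    qed
    have feas': "sdp_feasible M A b (transpose U ** (mat 1 + F) ** U)"
      using feasZ on unfolding sdp_feasible_def X' frob_inner ON_def
      by (simp add: inner_add_right inner_diff_right inner_commute)
    have "frob C Xd \<le> frob C (transpose U ** (mat 1 + F) ** U)"
      using opt YK feas' by blast
    also have "\<dots> = v - c" unfolding X' v_def frob_inner using CC by (simp add: inner_add_right inner_diff_right)
    finally show ?thesis unfolding c_def .
  qed
  have "R \<le> (v - frob C Xd) * norm V"
  proof (rule dense_le_bounded[OF R])
    fix w assume "0 < w" "w < R"
    then have "frob C Xd \<le> v - w / norm V" using main by simp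
    then show "w \<le> (v - frob C Xd) * norm V" using nV0 by (simp add: field_simps)
  qed
  then have "R / norm V \<le> v - frob C Xd" using nV0 by (simp add: field_simps)
  moreover have "R / (t * sg) \<le> R / norm V" using nVb nV0 R t sg0 by (intro divide_left_mono) auto
  ultimately show ?thesis unfolding v_def sg_def by simp
qed

lemma quad_axis: "axis i 1 \<bullet> ((Q::'n::finite rmat) *v axis j 1) = Q$i$j"
proof -
  have "(Q *v axis j 1)$i = (\<Sum>k\<in>UNIV. Q$i$k * (if k = j then 1 else 0))"
    unfolding matrix_vector_mult_def axis_def by simp
  also have "\<dots> = (\<Sum>k\<in>UNIV. if k = j then Q$i$k else 0)" by (intro sum.cong) auto
  also have "\<dots> = Q$i$j" by simp
  finally have "(Q *v axis j 1)$i = Q$i$j" .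
  then show ?thesis by (simp add: inner_axis')
qed

lemma psd_entry_bound:
  fixes Q :: "'n::finite rmat"
  assumes "psd Q"
  shows "\<bar>Q$i$j\<bar> \<le> trace Q"
proof -
  have symQ: "sym_mat Q" and nn: "\<And>v. 0 \<le> v \<bullet> (Q *v v)" using assms psd_def by auto
  have diag: "0 \<le> Q$k$k" for k using nn[of "axis k 1"] quad_axis[of k Q k] by simp
  have Qji: "Q$j$i = Q$i$j" using symQ unfolding sym_mat_def by (metis transpose_def vec_lambda_beta)
  have pm: "0 \<le> Q$i$i + Q$j$j + 2 * s * Q$i$j" if "s = 1 \<or> s = -1" for s
  proof -
    define x :: "real^'n" where "x = axis i 1"
    define y :: "real^'n" where "y = s *\<^sub>R axis j 1"
    have "(x + y) \<bullet> (Q *v (x + y)) = x \<bullet> (Q *v x) + x \<bullet> (Q *v y) + y \<bullet> (Q *v x) + y \<bullet> (Q *v y)"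
      by (simp add: matrix_vector_right_distrib inner_add_left inner_add_right)
    also have "\<dots> = Q$i$i + 2 * s * Q$i$j + s * s * Q$j$j"
      unfolding x_def y_def using Qji
      by (simp add: matrix_vector_mult_scaleR quad_axis)
    finally have "0 \<le> Q$i$i + 2 * s * Q$i$j + s * s * Q$j$j" using nn[of "x + y"] by simp
    moreover have "s * s = 1" using that by auto
    ultimately show ?thesis by simp
  qed
  have "\<bar>Q$i$j\<bar> \<le> (Q$i$i + Q$j$j) / 2" using pm[of 1] pm[of "-1"] by (simp add: abs_le_iff)
  also have "\<dots> \<le> trace Q"
  proof -
    have "Q$i$i \<le> trace Q" "Q$j$j \<le> trace Q" unfolding trace_def
      by (intro member_le_sum; simp add: diag)+
    then show ?thesis by simp
  qed
  finally show ?thesis .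
qed

lemma psd_norm_bound:
  fixes Q :: "'n::finite rmat"
  assumes "psd Q"
  shows "norm Q \<le> real CARD('n) * trace Q"
proof -
  have tr0: "0 \<le> trace Q" using psd_entry_bound[OF assms] abs_ge_zero order_trans by blast
  have "(norm Q)^2 = (\<Sum>i\<in>UNIV. \<Sum>j\<in>UNIV. (Q$i$j)^2)" by (rule norm_sq_mat)
  also have "\<dots> \<le> (\<Sum>i\<in>(UNIV::'n set). \<Sum>j\<in>(UNIV::'n set). (trace Q)^2)"
  proof -
    have "(Q$i$j)^2 \<le> (trace Q)^2" for i j
      using psd_entry_bound[OF assms, of i j] tr0 by (simp add: power2_le_iff_abs_le)
    then show ?thesis by (intro sum_mono) auto
  qed
  also have "\<dots> = (real CARD('n) * trace Q)^2" by (simp add: power2_eq_square)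
  finally show ?thesis using tr0 by (simp add: power2_le_iff_abs_le)
qed

lemma pd_scale:
  fixes X :: "'n::finite rmat"
  assumes "pd X" "0 < c" shows "pd (c *\<^sub>R X)"
  unfolding pd_def
proof (intro conjI allI impI)
  show "sym_mat (c *\<^sub>R X)" using assms pd_def sym_scale by blast
  fix v :: "real^'n" assume "v \<noteq> 0"
  then have "0 < v \<bullet> (X *v v)" using assms pd_def by blast
  moreover have "v \<bullet> ((c *\<^sub>R X) *v v) = c * (v \<bullet> (X *v v))"
    by (simp add: scaleR_matrix_vector_assoc[symmetric])
  ultimately show "0 < v \<bullet> ((c *\<^sub>R X) *v v)" using assms(2) by simp
qed

lemma gamma_bound:
  fixes U0 C X :: "'n::finite rmat"
  assumes on: "ON C M A" and symC: "sym_mat C" and symA: "\<forall>i<M. sym_mat (A i)" and U0: "invertible U0"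
    and feasZ: "sdp_feasible M A b (transpose U0 ** U0)"
    and pdX: "pd X" and feasX: "sdp_feasible M A b X"
    and Xinv: "matrix_inv X = t *\<^sub>R (C - (\<Sum>i<M. g i *\<^sub>R A i))"
    and t0: "0 < t0" and t: "t0 \<le> t" and low: "p \<le> frob C X"
  shows "1 + (\<Sum>i<M. (g i)^2) \<le> ((norm (matrix_inv U0))^2 * real CARD('n) *
            (frob C (transpose U0 ** U0) - p + real CARD('n) / t0))^2"
proof -
  define S where "S = C - (\<Sum>i<M. g i *\<^sub>R A i)"
  define Z0 where "Z0 = transpose U0 ** U0"
  define W where "W = matrix_inv U0"
  define S' where "S' = U0 ** S ** transpose U0"
  define N where "N = real CARD('n)"
  have tpos: "t > 0" using t0 t by simp
  have fZ: "\<forall>i<M. frob (A i) Z0 = b i" using feasZ unfolding sdp_feasible_def Z0_def .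
  have fX: "\<forall>i<M. frob (A i) X = b i" using feasX unfolding sdp_feasible_def .
  have SX: "S = (1 / t) *\<^sub>R matrix_inv X" unfolding Xinv S_def using tpos by simp
  have pdS: "pd S" unfolding SX using pd_scale[OF pd_inv[OF pdX]] tpos by simp
  have symS: "sym_mat S" using pdS pd_def by blast
  have pdS': "pd S'" unfolding S'_def using pd_congr[OF pdS transpose_invertible[OF U0]] by simp
  have trS': "trace S' = frob S Z0"
  proof -
    have "trace S' = trace (S ** transpose U0 ** U0)" unfolding S'_def by (metis matrix_mul_assoc trace_mul_sym)
    also have "\<dots> = frob S Z0" unfolding Z0_def using frob_trace_sym[OF symS] by (simp add: matrix_mul_assoc)
    finally show ?thesis .
  qed
  have e1: "frob S Z0 = frob C Z0 - (\<Sum>i<M. g i * b i)"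
    using frob_central[OF fZ, of 1 C g] unfolding S_def by simp
  have e2: "frob S X = frob C X - (\<Sum>i<M. g i * b i)"
    using frob_central[OF fX, of 1 C g] unfolding S_def by simp
  have "frob S X = (1/t) * frob (matrix_inv X) X" unfolding SX frob_inner by simp
  also have "frob (matrix_inv X) X = N" unfolding N_def
    using frob_inv_self pdX pd_def pd_invertible by blast
  finally have e3: "frob S X = N / t" by simp
  have Nt: "N / t \<le> N / t0" using t0 t unfolding N_def by (intro divide_left_mono) auto
  have B: "trace S' \<le> frob C Z0 - p + N / t0" using trS' e1 e2 e3 low Nt by linarith
  have SWS: "S = W ** S' ** transpose W"
  proof -
    have WU: "W ** U0 = mat 1" using inv_props[OF U0] W_def by auto
    have tWU: "transpose U0 ** transpose W = mat 1" using WU by (metis matrix_transpose_mul transpose_mat)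
    have "W ** S' ** transpose W = (W ** U0) ** S ** (transpose U0 ** transpose W)"
      unfolding S'_def by (simp add: matrix_mul_assoc)
    then show ?thesis by (simp add: WU tWU)
  qed
  have "norm S \<le> norm (W ** S') * norm (transpose W)" unfolding SWS by (rule norm_mat_mul)
  also have "\<dots> \<le> (norm W * norm S') * norm W"
    by (intro mult_mono norm_mat_mul) (auto simp: norm_transpose_mat)
  also have "\<dots> \<le> (norm W * (N * trace S')) * norm W"
  proof -
    have nb: "norm S' \<le> N * trace S'" using psd_norm_bound[OF pd_psd[OF pdS']] unfolding N_def .
    have "norm W * norm S' \<le> norm W * (N * trace S')" using nb by (rule mult_left_mono) simp
    then show ?thesis by (rule mult_right_mono) simp
  qed
  also have "\<dots> \<le> (norm W * (N * (frob C Z0 - p + N / t0))) * norm W"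
  proof -
    have "N * trace S' \<le> N * (frob C Z0 - p + N / t0)" using B unfolding N_def by (intro mult_left_mono) auto
    then have "norm W * (N * trace S') \<le> norm W * (N * (frob C Z0 - p + N / t0))" by (rule mult_left_mono) simp
    then show ?thesis by (rule mult_right_mono) simp
  qed
  finally have nS: "norm S \<le> (norm W)^2 * N * (frob C Z0 - p + N / t0)" by (simp add: power2_eq_square mult_ac)
  have "1 + (\<Sum>i<M. (g i)^2) = (norm S)^2" unfolding S_def using ON_S(3)[OF on, where c=g]
    by (simp add: power2_norm_eq_inner)
  also have "\<dots> \<le> ((norm W)^2 * N * (frob C Z0 - p + N / t0))^2"
    using nS by (intro power_mono) auto
  finally show ?thesis unfolding W_def N_def Z0_def .
qed

theorem theorem4p12:
  fixes C :: "('n::{finite,wellorder}) rmat"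
    and M :: nat and A :: "nat \<Rightarrow> 'n rmat" and b :: "nat \<Rightarrow> real"
    and Xt :: "real \<Rightarrow> 'n rmat" and \<gamma> :: "real \<Rightarrow> nat \<Rightarrow> real"
    and K :: "'n rmat set" and \<Phi> t0 \<epsilon> :: real
    and Xs Xdec U :: "nat \<Rightarrow> 'n rmat"
  assumes symC: "sym_mat C" and symA: "\<forall>i<M. sym_mat (A i)"
    and orthA: "\<forall>i<M. \<forall>j<M. i \<noteq> j \<longrightarrow> frob (A i) (A j) = 0"
    and orthC: "\<forall>i<M. frob (A i) C = 0"
    and normC: "frob_norm C = 1" and normA: "\<forall>i<M. frob_norm (A i) = 1"
    and strict_feas: "\<exists>X. pd X \<and> sdp_feasible M A b X"
    and bounded: "bdd_below {frob C X | X. sdp_feasible M A b X \<and> psd X}"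
    and central: "\<forall>t>0. pd (Xt t) \<and> sdp_feasible M A b (Xt t) \<and>
        (\<forall>X. pd X \<and> sdp_feasible M A b X \<longrightarrow>
           frob C (Xt t) - ln (det (Xt t)) / t \<le> frob C X - ln (det X) / t)"
    and multipliers: "\<forall>t>0. matrix_inv (Xt t) = t *\<^sub>R (C - (\<Sum>i<M. \<gamma> t i *\<^sub>R A i))"
    and K_choice: "(K = {Y. dd Y} \<and> 0 < \<Phi> \<and> \<Phi> \<le> 2 / (real CARD('n) + 1))
                 \<or> (K = {Y. sdd Y} \<and> 0 < \<Phi> \<and> \<Phi> \<le> 1)"
    and t0_pos: "0 < t0" and eps_pos: "0 < \<epsilon>" and eps_le: "\<epsilon> \<le> real CARD('n) / t0"
    and init: "Xs 0 = Xt t0"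
    and chol: "\<forall>k\<ge>1. cholesky_factor (U (k - 1)) (Xs (k - 1))"
    and dec_step: "\<forall>k\<ge>1.
        (\<exists>Y\<in>K. Xdec k = transpose (U (k - 1)) ** Y ** U (k - 1)) \<and> sdp_feasible M A b (Xdec k) \<and>
        (\<forall>X. \<forall>Y\<in>K. sdp_feasible M A b X \<and> X = transpose (U (k - 1)) ** Y ** U (k - 1)
              \<longrightarrow> frob C (Xdec k) \<le> frob C X)"
    and center_step: "\<forall>k\<ge>1.
        pd (Xs k) \<and> sdp_feasible M A b (Xs k) \<and> frob C (Xs k) = frob C (Xdec k) \<and>
        (\<forall>X. pd X \<and> sdp_feasible M A b X \<and> frob C X = frob C (Xdec k)
              \<longrightarrow> ln (det X) \<le> ln (det (Xs k)))"
  shows "let N = real CARD('n); tstar = N / \<epsilon>;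
             Theta = (SUP t\<in>{t0..tstar}. \<Sum>i<M. (\<gamma> t i)\<^sup>2);
             chi = N * sqrt (1 + Theta) / (N * sqrt (1 + Theta) - sqrt \<Phi>);
             kappa = nat \<lceil>(ln (N / \<epsilon>) - ln t0) / ln chi\<rceil>
         in 1 < chi \<and> frob C (Xs kappa) - sdp_opt C M A b \<le> \<epsilon>"
proof -
  define N where "N = real CARD('n)"
  define p where "p = sdp_opt C M A b"
  have N1: "1 \<le> N" unfolding N_def by (simp add: Suc_leI)
  have on: "ON C M A" using ON_intro[OF orthA orthC normC normA] .
  have cholk: "invertible (U k) \<and> Xs k = transpose (U k) ** U k" for k
    using chol[rule_format, of "Suc k"] chol_invertible[of "U k" "Xs k"] by auto
  have cen: "pd (Xt t)" "sdp_feasible M A b (Xt t)" "matrix_inv (Xt t) = t *\<^sub>R (C - (\<Sum>i<M. \<gamma> t i *\<^sub>R A i))"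
    if "t > 0" for t
    using central multipliers that by auto
  define Sset where "Sset = {frob C X | X. sdp_feasible M A b X \<and> psd X}"
  have pdef: "p = Inf Sset" unfolding p_def sdp_opt_def Sset_def ..
  have low: "p \<le> frob C X" if "psd X" "sdp_feasible M A b X" for X
    unfolding pdef using bounded that unfolding Sset_def by (intro cInf_lower) auto
  have lowt: "p \<le> frob C (Xt t)" if "t > 0" for t
    using low[OF pd_psd[OF cen(1)[OF that]] cen(2)[OF that]] .
  have frobCinv: "frob C (matrix_inv (Xt t)) = t" if "t > 0" for t
  proof -
    have "frob C (matrix_inv (Xt t)) = t * ((C - (\<Sum>i<M. \<gamma> t i *\<^sub>R A i)) \<bullet> C)"
      unfolding cen(3)[OF that] frob_inner by (simp add: inner_commute)
    also have "\<dots> = t" using ON_S(1)[OF on, where c="\<gamma> t"] by simp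
    finally show ?thesis .
  qed
  have gap: "frob C (Xt t) - N / t \<le> p" if tp: "t > 0" and eqk: "Xs k = Xt t" for t k
  proof -
    have inv: "invertible (U k)" and eq: "Xs k = transpose (U k) ** U k" using cholk by auto
    have Zinv: "matrix_inv (transpose (U k) ** U k) = t *\<^sub>R (C - (\<Sum>i<M. \<gamma> t i *\<^sub>R A i))"
      using cen(3)[OF tp] eq eqk by simp
    have feasZ: "sdp_feasible M A b (transpose (U k) ** U k)" using cen(2)[OF tp] eq eqk by simp
    have ne: "Sset \<noteq> {}" unfolding Sset_def using cen(1,2)[OF tp] pd_psd by blast
    have "frob C (transpose (U k) ** U k) - N / t \<le> p" unfolding pdef
    proof (rule cInf_greatest[OF ne])
      fix x assume "x \<in> Sset"
      then obtain X where "x = frob C X" "sdp_feasible M A b X" "psd X" unfolding Sset_def by blast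
      then show "frob C (transpose (U k) ** U k) - N / t \<le> x"
        using gap_bound[OF inv Zinv tp feasZ] unfolding N_def by blast
    qed
    then show ?thesis using eq eqk by simp
  qed
  have Rpos: "0 < sqrt \<Phi>" using K_choice by auto
  have Phi1: "\<Phi> \<le> 1"
  proof -
    have h: "2 / (real CARD('n) + 1) \<le> 1" using N1 unfolding N_def by (simp add: divide_le_eq)
    from K_choice show ?thesis
    proof
      assume "K = {Y. dd Y} \<and> 0 < \<Phi> \<and> \<Phi> \<le> 2 / (real CARD('n) + 1)"
      then show ?thesis using h by linarith
    qed auto
  qed
  have ball: "\<forall>F. sym_mat F \<and> norm F < sqrt \<Phi> \<longrightarrow> mat 1 + F \<in> K"
  proof (intro allI impI)
    fix F :: "'n rmat" assume F: "sym_mat F \<and> norm F < sqrt \<Phi>"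
    from K_choice show "mat 1 + F \<in> K"
    proof
      assume c: "K = {Y. dd Y} \<and> 0 < \<Phi> \<and> \<Phi> \<le> 2 / (real CARD('n) + 1)"
      have "(norm F)^2 \<le> (sqrt \<Phi>)^2" using F by (intro power_mono) auto
      then have "(norm F)^2 \<le> \<Phi>" using c by simp
      then show ?thesis using dd_ball[of F \<Phi>] c F by auto
    next
      assume c: "K = {Y. sdd Y} \<and> 0 < \<Phi> \<and> \<Phi> \<le> 1"
      have "sqrt \<Phi> \<le> 1" using c by simp
      then have "norm F < 1" using F by linarith
      then show ?thesis using sdd_ball[of F] F c by auto
    qed
  qed
  have steppos: "0 < sqrt \<Phi> / (t * sqrt (1 + (\<Sum>i<M. (\<gamma> t i)^2)))" if "t > 0" for t
    using Rpos that by (intro divide_pos_pos mult_pos_pos) (auto simp: sum_nonneg add_pos_nonneg)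
  have step: "frob C (Xs (Suc k)) \<le> frob C (Xs k) - sqrt \<Phi> / (t * sqrt (1 + (\<Sum>i<M. (\<gamma> t i)^2)))"
    if tp: "t > 0" and eqk: "Xs k = Xt t" for k t
  proof -
    have inv: "invertible (U k)" and eq: "Xs k = transpose (U k) ** U k" using cholk by auto
    have Zinv: "matrix_inv (transpose (U k) ** U k) = t *\<^sub>R (C - (\<Sum>i<M. \<gamma> t i *\<^sub>R A i))"
      using cen(3)[OF tp] eq eqk by simp
    have feasZ: "sdp_feasible M A b (transpose (U k) ** U k)" using cen(2)[OF tp] eq eqk by simp
    have opt: "\<forall>X. \<forall>Y\<in>K. sdp_feasible M A b X \<and> X = transpose (U k) ** Y ** U k \<longrightarrow> frob C (Xdec (Suc k)) \<le> frob C X"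
      using dec_step[rule_format, of "Suc k"] by simp
    have "frob C (Xdec (Suc k)) \<le> frob C (transpose (U k) ** U k) - sqrt \<Phi> / (t * sqrt (1 + (\<Sum>i<M. (\<gamma> t i)^2)))"
      by (rule step_bound[OF on symC inv Zinv tp feasZ ball Rpos opt])
    moreover have "frob C (Xs (Suc k)) = frob C (Xdec (Suc k))" using center_step[rule_format, of "Suc k"] by simp
    ultimately show ?thesis using eq by simp
  qed
  have strict: "p < frob C (Xt t)" if tp: "t > 0" and eqk: "Xs k = Xt t" for t k
  proof -
    have inv: "invertible (U k)" and eq: "Xs k = transpose (U k) ** U k" using cholk by auto
    define Z where "Z = transpose (U k) ** U k"
    have Zinv: "matrix_inv (transpose (U k) ** U k) = t *\<^sub>R C + (\<Sum>i<M. (- t * \<gamma> t i) *\<^sub>R A i)"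
      using cen(3)[OF tp] eq eqk central_repr by simp
    have feasZ: "sdp_feasible M A b (transpose (U k) ** U k)" using cen(2)[OF tp] eq eqk by simp
    have t2: "2 * t > 0" using tp by simp
    have cmp: "frob (matrix_inv Z) (Xt (2*t)) + frob (matrix_inv (Xt (2*t))) Z
          = 2 * real CARD('n) + (2 * t - t) * (frob C Z - frob C (Xt (2*t)))"
      unfolding Z_def by (rule cmp_identity[OF inv Zinv feasZ cen(1)[OF t2] cen(2)[OF t2] cen(3)[OF t2]])
    have ge: "2 * real CARD('n) \<le> frob (matrix_inv Z) (Xt (2*t)) + frob (matrix_inv (Xt (2*t))) Z"
      unfolding Z_def by (rule key_unique(1)[OF inv cen(1)[OF t2]])
    have "frob C (Xt (2*t)) < frob C Z"
    proof (rule ccontr)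
      assume "\<not> frob C (Xt (2*t)) < frob C Z"
      then have "frob C Z - frob C (Xt (2*t)) \<le> 0" by simp
      then have "frob (matrix_inv Z) (Xt (2*t)) + frob (matrix_inv (Xt (2*t))) Z = 2 * real CARD('n)"
        using cmp ge tp by (smt (verit) mult_nonneg_nonpos)
      then have "Z = Xt (2*t)" unfolding Z_def using key_unique(2)[OF inv cen(1)[OF t2]] by blast
      then have "Xt t = Xt (2*t)" using eq eqk Z_def by simp
      then have "t = 2 * t" using frobCinv[OF tp] frobCinv[OF t2] by simp
      then show False using tp by simp
    qed
    then show ?thesis using lowt[OF t2] eq eqk Z_def by simp
  qed
  have ident: "(\<exists>t\<ge>t0. Xs k = Xt t) \<and> frob C (Xs k) \<le> frob C (Xs 0)" for k
  proof (induction k)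
    case 0 show ?case using init by auto
  next
    case (Suc k)
    obtain t where t: "t \<ge> t0" "Xs k = Xt t" using Suc.IH by blast
    have tp: "t > 0" using t t0_pos by simp
    have v1: "frob C (Xs (Suc k)) \<le> frob C (Xs 0)" using step[OF tp t(2)] steppos[OF tp] Suc.IH by linarith
    have inv1: "invertible (U (Suc k))" and eq1: "Xs (Suc k) = transpose (U (Suc k)) ** U (Suc k)" using cholk by auto
    define Z where "Z = transpose (U (Suc k)) ** U (Suc k)"
    have cs: "pd (Xs (Suc k))" "sdp_feasible M A b (Xs (Suc k))" "frob C (Xs (Suc k)) = frob C (Xdec (Suc k))"
      "\<forall>X. pd X \<and> sdp_feasible M A b X \<and> frob C X = frob C (Xdec (Suc k)) \<longrightarrow> ln (det X) \<le> ln (det (Xs (Suc k)))"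
      using center_step[rule_format, of "Suc k"] by auto
    have feasZ: "sdp_feasible M A b Z" using cs(2) eq1 Z_def by simp
    have maxZ: "\<forall>Y. pd Y \<and> (\<forall>i<M. frob (A i) Y = frob (A i) (transpose (U (Suc k)) ** U (Suc k))) \<and>
          frob C Y = frob C (transpose (U (Suc k)) ** U (Suc k)) \<longrightarrow> ln (det Y) \<le> ln (det (transpose (U (Suc k)) ** U (Suc k)))"
    proof (intro allI impI)
      fix Y assume Y: "pd Y \<and> (\<forall>i<M. frob (A i) Y = frob (A i) (transpose (U (Suc k)) ** U (Suc k))) \<and>
          frob C Y = frob C (transpose (U (Suc k)) ** U (Suc k))"
      have "sdp_feasible M A b Y" using Y feasZ unfolding sdp_feasible_def Z_def by auto
      then show "ln (det Y) \<le> ln (det (transpose (U (Suc k)) ** U (Suc k)))"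
        using cs(3,4) Y eq1 by auto
    qed
    have repr: "matrix_inv Z = frob C (matrix_inv Z) *\<^sub>R C + (\<Sum>i<M. frob (A i) (matrix_inv Z) *\<^sub>R A i)"
      unfolding Z_def by (rule kkt_repr[OF on symC symA inv1 maxZ])
    define l where "l = frob C (matrix_inv Z)"
    have cmp: "frob (matrix_inv Z) (Xt s) + frob (matrix_inv (Xt s)) Z
          = 2 * real CARD('n) + (s - l) * (frob C Z - frob C (Xt s))" if sp: "s > 0" for s
      unfolding Z_def l_def
      by (rule cmp_identity[OF inv1 repr[unfolded Z_def] feasZ[unfolded Z_def] cen(1)[OF sp] cen(2)[OF sp] cen(3)[OF sp]])
    have ge: "0 \<le> (s - l) * (frob C Z - frob C (Xt s))" if sp: "s > 0" for s
      using cmp[OF sp] key_unique(1)[OF inv1 cen(1)[OF sp]] unfolding Z_def by simp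
    have eqc: "Z = Xt s" if sp: "s > 0" and z: "(s - l) * (frob C Z - frob C (Xt s)) = 0" for s
      using cmp[OF sp] key_unique(2)[OF inv1 cen(1)[OF sp]] z unfolding Z_def by simp
    have lZ: "l = s" if sp: "s > 0" and z: "Z = Xt s" for s
      unfolding l_def z using frobCinv[OF sp] .
    have t0p: "t0 > 0" by (rule t0_pos)
    have l_ge: "t0 \<le> l"
    proof (rule ccontr)
      assume "\<not> t0 \<le> l"
      then have lt: "0 < t0 - l" by simp
      have "0 \<le> frob C Z - frob C (Xt t0)"
        using ge[OF t0p] lt by (simp add: zero_le_mult_iff)
      moreover have "frob C Z \<le> frob C (Xt t0)" using v1 eq1 Z_def init by simp
      ultimately have "(t0 - l) * (frob C Z - frob C (Xt t0)) = 0" by simp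
      then have "Z = Xt t0" using eqc[OF t0p] by simp
      then have "l = t0" using lZ[OF t0p] by simp
      then show False using lt by simp
    qed
    have lp: "l > 0" using l_ge t0_pos by simp
    have "Z = Xt l" using eqc[OF lp] by simp
    then show ?case using l_ge eq1 Z_def v1 by auto
  qed
  define tstar where "tstar = N / \<epsilon>"
  define \<Theta> where "\<Theta> = (SUP t\<in>{t0..tstar}. \<Sum>i<M. (\<gamma> t i)\<^sup>2)"
  have tstar_ge: "t0 \<le> tstar"
    using eps_le eps_pos t0_pos unfolding tstar_def N_def by (simp add: field_simps)
  have bdd: "bdd_above ((\<lambda>t. \<Sum>i<M. (\<gamma> t i)\<^sup>2) ` {t0..tstar})"
  proof -
    have inv0: "invertible (U 0)" and eq0: "Xs 0 = transpose (U 0) ** U 0" using cholk by auto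
    have feas0: "sdp_feasible M A b (transpose (U 0) ** U 0)" using cen(2)[OF t0_pos] init eq0 by simp
    define Bc where "Bc = ((norm (matrix_inv (U 0)))^2 * real CARD('n) *
            (frob C (transpose (U 0) ** U 0) - p + real CARD('n) / t0))^2"
    have "(\<Sum>i<M. (\<gamma> t i)\<^sup>2) \<le> Bc" if "t \<in> {t0..tstar}" for t
    proof -
      have tt: "t0 \<le> t" using that by simp
      have tp: "t > 0" using tt t0_pos by simp
      have "1 + (\<Sum>i<M. (\<gamma> t i)\<^sup>2) \<le> Bc" unfolding Bc_def
        by (rule gamma_bound[OF on symC symA inv0 feas0 cen(1)[OF tp] cen(2)[OF tp] cen(3)[OF tp] t0_pos tt lowt[OF tp]])
      then show ?thesis by simp
    qed
    then show ?thesis by (intro bdd_aboveI2) auto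
  qed
  have sig_le: "(\<Sum>i<M. (\<gamma> t i)\<^sup>2) \<le> \<Theta>" if "t0 \<le> t" "t \<le> tstar" for t
    unfolding \<Theta>_def using that by (intro cSUP_upper bdd) auto
  have Th0: "0 \<le> \<Theta>" using sig_le[OF order_refl tstar_ge] by (meson order_trans sum_nonneg zero_le_power2)
  define a where "a = N * sqrt (1 + \<Theta>)"
  define q where "q = sqrt \<Phi> / a"
  have a1: "1 \<le> a"
  proof -
    have "1 \<le> sqrt (1 + \<Theta>)" using Th0 by simp
    then show ?thesis unfolding a_def using N1 by (metis mult_mono' mult_1 zero_le_one)
  qed
  have apos: "0 < a" using a1 by simp
  have qpos: "0 < q" unfolding q_def using Rpos apos by simp
  have decq: "sqrt \<Phi> / (t * sqrt (1 + (\<Sum>i<M. (\<gamma> t i)^2))) \<ge> q * (N / t)"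
    if "t0 \<le> t" "t \<le> tstar" for t
  proof -
    have tp: "t > 0" using that t0_pos by simp
    have "sqrt (1 + (\<Sum>i<M. (\<gamma> t i)^2)) \<le> sqrt (1 + \<Theta>)" using sig_le[OF that] by simp
    moreover have "0 < sqrt (1 + (\<Sum>i<M. (\<gamma> t i)^2))" by (simp add: sum_nonneg add_pos_nonneg)
    ultimately have "sqrt \<Phi> / (t * sqrt (1 + \<Theta>)) \<le> sqrt \<Phi> / (t * sqrt (1 + (\<Sum>i<M. (\<gamma> t i)^2)))"
      using tp Rpos by (intro divide_left_mono mult_left_mono mult_pos_pos) auto
    moreover have "q * (N / t) = sqrt \<Phi> / (t * sqrt (1 + \<Theta>))"
      unfolding q_def a_def using N1 tp by (simp add: field_simps)
    ultimately show ?thesis by simp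
  qed
  have a_gt: "sqrt \<Phi> < a"
  proof (rule ccontr)
    assume "\<not> sqrt \<Phi> < a"
    then have q1: "1 \<le> q" unfolding q_def using apos by (simp add: le_divide_eq)
    have g0: "frob C (Xs 0) - N / t0 \<le> p" using gap[OF t0_pos init] init by simp
    have "frob C (Xs 1) \<le> frob C (Xs 0) - q * (N / t0)"
      using step[OF t0_pos init] decq[OF order_refl tstar_ge] by simp
    moreover have "q * (N / t0) \<ge> N / t0" using mult_right_mono[OF q1, of "N / t0"] N1 t0_pos by simp
    ultimately have "frob C (Xs 1) \<le> p" using g0 by linarith
    moreover obtain t1 where "t1 \<ge> t0" "Xs 1 = Xt t1" using ident[of 1] by blast
    ultimately show False using strict[of t1 1] t0_pos by simp
  qed
  define chi where "chi = a / (a - sqrt \<Phi>)"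
  have chi1: "1 < chi" unfolding chi_def using a_gt Rpos by (simp add: less_divide_eq)
  have q_chi: "1 - q = 1 / chi" unfolding chi_def q_def using a_gt apos by (simp add: field_simps)
  have q1: "q < 1" using q_chi chi1 by (smt (verit) divide_pos_pos)
  have main: "frob C (Xs k) - p \<le> max \<epsilon> (N / t0 * (1 - q)^k)" for k
  proof (induction k)
    case 0 show ?case using gap[OF t0_pos init] init by simp
  next
    case (Suc k)
    obtain t where t: "t \<ge> t0" "Xs k = Xt t" using ident[of k] by blast
    have tp: "t > 0" using t t0_pos by simp
    have gk: "frob C (Xs k) - p \<le> N / t" using gap[OF tp t(2)] t(2) by simp
    show ?case
    proof (cases "t \<le> tstar")
      case True
      have "frob C (Xs (Suc k)) - p \<le> (frob C (Xs k) - p) - q * (N / t)"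
        using step[OF tp t(2)] decq[OF t(1) True] by simp
      also have "\<dots> \<le> (1 - q) * (frob C (Xs k) - p)"
      proof -
        have h: "q * (frob C (Xs k) - p) \<le> q * (N / t)" using mult_left_mono[OF gk] qpos by simp
        have e: "(1 - q) * (frob C (Xs k) - p) = (frob C (Xs k) - p) - q * (frob C (Xs k) - p)"
          by (simp add: algebra_simps)
        show ?thesis using h e by linarith
      qed
      also have "\<dots> \<le> (1 - q) * max \<epsilon> (N / t0 * (1 - q)^k)"
        using Suc.IH q1 by (intro mult_left_mono) auto
      also have "\<dots> = max ((1 - q) * \<epsilon>) (N / t0 * (1 - q)^(Suc k))"
        using q1 by (simp add: max_mult_distrib_left mult_ac)
      also have "\<dots> \<le> max \<epsilon> (N / t0 * (1 - q)^(Suc k))"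
        using qpos eps_pos by (intro max.mono) (auto simp: mult_le_cancel_right1)
      finally show ?thesis .
    next
      case False
      have "frob C (Xs (Suc k)) - p \<le> frob C (Xs k) - p" using step[OF tp t(2)] steppos[OF tp] by simp
      also have "\<dots> \<le> N / t" by (rule gk)
      also have "\<dots> \<le> N / tstar" using False N1 tstar_ge t0_pos by (intro divide_left_mono) auto
      also have "\<dots> = \<epsilon>" unfolding tstar_def using eps_pos N1 by simp
      finally show ?thesis by simp
    qed
  qed
  define kappa where "kappa = nat \<lceil>(ln (N / \<epsilon>) - ln t0) / ln chi\<rceil>"
  have lnchi: "0 < ln chi" using chi1 by simp
  have kbound: "N / t0 * (1 - q)^kappa \<le> \<epsilon>"
  proof -
    have "(ln (N / \<epsilon>) - ln t0) / ln chi \<le> real kappa" unfolding kappa_def by linarith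
    then have "ln (N / \<epsilon>) - ln t0 \<le> real kappa * ln chi" using lnchi by (simp add: divide_le_eq)
    also have "\<dots> = ln (chi ^ kappa)" using chi1 by (simp add: ln_realpow)
    finally have "ln (N / (\<epsilon> * t0)) \<le> ln (chi ^ kappa)"
      using N1 eps_pos t0_pos by (simp add: ln_div ln_mult)
    then have "N / (\<epsilon> * t0) \<le> chi ^ kappa" using N1 eps_pos t0_pos chi1 by simp
    then have h: "N / t0 \<le> \<epsilon> * chi ^ kappa" using eps_pos t0_pos by (simp add: field_simps)
    have cpos: "0 < chi ^ kappa" using chi1 by simp
    have eq: "N / t0 * (1 - q)^kappa = (N / t0) / chi ^ kappa" using q_chi by (simp add: power_one_over)
    have h2: "(N / t0) / chi ^ kappa \<le> \<epsilon>" unfolding pos_divide_le_eq[OF cpos] using h by (simp add: mult.commute)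
    show ?thesis unfolding eq by (rule h2)
  qed
  have final: "frob C (Xs kappa) - p \<le> \<epsilon>" using main[of kappa] kbound eps_pos by simp
  show ?thesis
    unfolding Let_def
    using chi1 final unfolding chi_def a_def \<Theta>_def tstar_def kappa_def p_def N_def chi_def by simp
qed

end
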